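(* Let $(C,S)$ be a partially shaded tree, where $C$ is the support tree of a vertex of a non-degenerate transportation polytope $\mathrm{TP}(u,v)$, and assume: (1) (UNO) holds in $(C,S)$; (2) no shaded $+$edge is incident to an open supply node; (3) a supply node $\sigma$ satisfies (SIN) in $(C,S)$. Choose an edge $e=\{\sigma,\delta\}$ incident to $\sigma$ as follows: if there is a $-$edge of $F$ incident to $\sigma$ not yet in $S$, let $e$ be one such edge; otherwise let $e$ be the unique $+$edge of $F$ incident to $\sigma$. (Insert and) shade $e$ to obtain the succeeding partially shaded tree $(\hat C,\hat S)$. Then exactly one of the following holds: (i) if $\delta^*$ is well-connected in $(\hat C,\hat S)$, then $(\hat C,\hat S)$ is fully shaded, i.e. $\hat C=F$ and all its edges are shaded; (ii) otherwise, $(\hat C,\hat S)$ is not fully shaded, (UNO) holds in $(\hat C,\hat S)$, and there is an open supply node satisfying (SIN) in $(\hat C,\hat S)$; such a node is obtained as follows: let $\delta'$ be the demand node of the deleted edge if $e$ was inserted, and $\delta'=\delta$ if $e$ was only shaded; if $\hat C$ contains an unshaded edge $\{\sigma',\delta'\}$, take $\sigma'$; otherwise take the supply node $\sigma''$ of the unique $-$edge $\{\sigma'',\delta'\}$ incident to $\delta'$.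
   Context: Let $N_1,N_2\ge1$, $u\in\mathbb{R}_{>0}^{N_1}$, $v\in\mathbb{R}_{>0}^{N_2}$ with $\sum_iu_i=\sum_jv_j$, and $\mathrm{TP}(u,v)=\{y\in\mathbb{R}^{N_1\times N_2}: \sum_j y_{ij}=u_i\ \forall i,\ \sum_i y_{ij}=v_j\ \forall j,\ y\ge 0\}$. Supply nodes $\sigma^1,\dots,\sigma^{N_1}$ and demand nodes $\delta^1,\dots,\delta^{N_2}$ form $K_{N_1,N_2}$; the support graph of $y$ consists of edges $\{\sigma^i,\delta^j\}$ with $y_{ij}>0$. $\mathrm{TP}(u,v)$ is non-degenerate if there are no nonempty proper $I\subsetneq\{1,\dots,N_1\}$, $J\subsetneq\{1,\dots,N_2\}$ with $\sum_{i\in I}u_i=\sum_{j\in J}v_j$; then each vertex's support graph is a spanning tree of $K_{N_1,N_2}$ determining the vertex (called a tree). Pivot: for a tree $C$ and an edge $e\notin C$, $C\cup\{e\}$ contains a unique cycle; alternately increasing (starting at $e$) and decreasing flow along it by the largest feasible amount yields an adjacent vertex whose tree is $C\cup\{e\}$ minus exactly one edge of the cycle (the deleted edge, determined by the margins). Fix a tree $F$ and a demand node $\delta^*$; label edges of $F$ alternately $+,-,+,\dots$ along paths in $F$ starting at $\delta^*$, beginning with $+$ (each supply node is incident in $F$ to exactly one $+$edge; each demand node other than $\delta^*$ to exactly one $-$edge; $\delta^*$ only to $+$edges). A partially shaded tree is $(C,S)$ with $C$ a tree and $S\subseteq C\cap F$ the shaded edges (others unshaded); shaded edges carry their $F$-labels;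 it is fully shaded if $S=C$. (Inserting and) shading an edge $e\in F\setminus S$: if $e\in C$, set $\hat C=C$ and shade $e$; if $e\notin C$, let $\hat C$ be the tree obtained by pivoting $e$ into $C$ and shade $e$; $\hat S$ is $S\cup\{e\}$ (minus the deleted edge if it was shaded). A supply node is well-connected if all edges of $F$ incident to it are shaded edges of the current tree, otherwise open; a demand node is well-connected if it is incident to no unshaded edge of the current tree, otherwise open. A well-connected edge is a shaded edge incident to a well-connected node. Well-connected components: connected components of the graph on all nodes with the well-connected edges as edges. (UNO) holds if every well-connected component contains exactly one open node. For a supply node $\sigma$, number the edges of the current tree along paths starting at $\sigma$ (edges at $\sigma$ get $1$); an edge is odd w.r.t. $\sigma$ if its number is odd. $\sigma$ satisfies (SIN) if every odd edge w.r.t. $\sigma$ is unshaded or a shaded $-$edge incident to a well-connected demand node. *)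

theory Defs
  imports Complex_Main
begin

text \<open>Supply indices are 0..<N1, demand indices 0..<N2.
  An edge {sigma^i, delta^j} of K_{N1,N2} is represented by the pair (i, j).\<close>

definition TP :: "nat \<Rightarrow> nat \<Rightarrow> (nat \<Rightarrow> real) \<Rightarrow> (nat \<Rightarrow> real) \<Rightarrow> (nat \<Rightarrow> nat \<Rightarrow> real) set" where
  "TP N1 N2 u v = {y. (\<forall>i<N1. (\<Sum>j<N2. y i j) = u i) \<and> (\<forall>j<N2. (\<Sum>i<N1. y i j) = v j)
       \<and> (\<forall>i j. 0 \<le> y i j) \<and> (\<forall>i j. \<not> (i < N1 \<and> j < N2) \<longrightarrow> y i j = 0)}"

definition non_degenerate :: "nat \<Rightarrow> nat \<Rightarrow> (nat \<Rightarrow> real) \<Rightarrow> (nat \<Rightarrow> real) \<Rightarrow> bool" where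
  "non_degenerate N1 N2 u v \<longleftrightarrow>
     \<not> (\<exists>I J. I \<noteq> {} \<and> I \<subset> {..<N1} \<and> J \<noteq> {} \<and> J \<subset> {..<N2} \<and> sum u I = sum v J)"

definition is_vertex :: "nat \<Rightarrow> nat \<Rightarrow> (nat \<Rightarrow> real) \<Rightarrow> (nat \<Rightarrow> real) \<Rightarrow> (nat \<Rightarrow> nat \<Rightarrow> real) \<Rightarrow> bool" where
  "is_vertex N1 N2 u v y \<longleftrightarrow> y \<in> TP N1 N2 u v \<and>
     (\<forall>a\<in>TP N1 N2 u v. \<forall>b\<in>TP N1 N2 u v. (\<forall>i j. y i j = (a i j + b i j) / 2) \<longrightarrow> a = b)"

definition supp :: "(nat \<Rightarrow> nat \<Rightarrow> real) \<Rightarrow> (nat \<times> nat) set" where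
  "supp y = {(i, j). y i j \<noteq> 0}"

definition vertex_tree :: "nat \<Rightarrow> nat \<Rightarrow> (nat \<Rightarrow> real) \<Rightarrow> (nat \<Rightarrow> real) \<Rightarrow> (nat \<times> nat) set \<Rightarrow> bool" where
  "vertex_tree N1 N2 u v C \<longleftrightarrow> (\<exists>y. is_vertex N1 N2 u v y \<and> supp y = C)"

text \<open>Pivot of edge e into tree C giving tree C': take the vertex y with support C, the
  direction d which is +1/-1 alternately along the unique cycle of C \<union> {e} (starting with
  +1 at e), i.e. d supported in C \<union> {e}, d e = 1, zero margins, and move by the largest
  feasible amount t.\<close>
definition pivot :: "nat \<Rightarrow> nat \<Rightarrow> (nat \<Rightarrow> real) \<Rightarrow> (nat \<Rightarrow> real) \<Rightarrow> (nat \<times> nat) set \<Rightarrow> nat \<times> nat \<Rightarrow> (nat \<times> nat) set \<Rightarrow> bool" where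
  "pivot N1 N2 u v C e C' \<longleftrightarrow>
     (\<exists>y d t. is_vertex N1 N2 u v y \<and> supp y = C \<and>
        supp d \<subseteq> insert e C \<and> d (fst e) (snd e) = 1 \<and>
        (\<forall>i j. d i j \<in> {-1, 0, 1}) \<and>
        (\<forall>i<N1. (\<Sum>j<N2. d i j) = 0) \<and> (\<forall>j<N2. (\<Sum>i<N1. d i j) = 0) \<and>
        0 \<le> t \<and> (\<forall>i j. 0 \<le> y i j + t * d i j) \<and>
        (\<forall>s>t. \<not> (\<forall>i j. 0 \<le> y i j + s * d i j)) \<and>
        C' = supp (\<lambda>i j. y i j + t * d i j))"

definition shade :: "nat \<Rightarrow> nat \<Rightarrow> (nat \<Rightarrow> real) \<Rightarrow> (nat \<Rightarrow> real) \<Rightarrow> (nat \<times> nat) set \<Rightarrow>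
    (nat \<times> nat) set \<Rightarrow> (nat \<times> nat) set \<Rightarrow> nat \<times> nat \<Rightarrow> (nat \<times> nat) set \<Rightarrow> (nat \<times> nat) set \<Rightarrow> bool" where
  "shade N1 N2 u v F C S e C' S' \<longleftrightarrow> e \<in> F \<and> e \<notin> S \<and>
     (if e \<in> C then C' = C \<and> S' = insert e S
      else pivot N1 N2 u v C e C' \<and> S' = insert e S - (C - C'))"

datatype node = Sup nat | Dem nat

definition nodes :: "nat \<Rightarrow> nat \<Rightarrow> node set" where
  "nodes N1 N2 = Sup ` {..<N1} \<union> Dem ` {..<N2}"

definition adj :: "(nat \<times> nat) set \<Rightarrow> node \<Rightarrow> node \<Rightarrow> bool" where
  "adj E a b \<longleftrightarrow> (\<exists>i j. (i, j) \<in> E \<and> ((a = Sup i \<and> b = Dem j) \<or> (a = Dem j \<and> b = Sup i)))"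

definition gdist :: "(nat \<times> nat) set \<Rightarrow> node \<Rightarrow> node \<Rightarrow> nat" where
  "gdist E a b = (LEAST n. (adj E ^^ n) a b)"

text \<open>Number of an edge when numbering along paths starting at the root r (edges at r get 1).\<close>
definition edge_num :: "(nat \<times> nat) set \<Rightarrow> node \<Rightarrow> nat \<times> nat \<Rightarrow> nat" where
  "edge_num E r e = max (gdist E r (Sup (fst e))) (gdist E r (Dem (snd e)))"

definition plus_edge :: "(nat \<times> nat) set \<Rightarrow> nat \<Rightarrow> nat \<times> nat \<Rightarrow> bool" where
  "plus_edge F ds e \<longleftrightarrow> e \<in> F \<and> odd (edge_num F (Dem ds) e)"

definition minus_edge :: "(nat \<times> nat) set \<Rightarrow> nat \<Rightarrow> nat \<times> nat \<Rightarrow> bool" where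
  "minus_edge F ds e \<longleftrightarrow> e \<in> F \<and> even (edge_num F (Dem ds) e)"

definition well_connected :: "(nat \<times> nat) set \<Rightarrow> (nat \<times> nat) set \<Rightarrow> (nat \<times> nat) set \<Rightarrow> node \<Rightarrow> bool" where
  "well_connected F C S x \<longleftrightarrow> (case x of
      Sup i \<Rightarrow> (\<forall>j. (i, j) \<in> F \<longrightarrow> (i, j) \<in> C \<and> (i, j) \<in> S)
    | Dem j \<Rightarrow> (\<forall>i. (i, j) \<in> C \<longrightarrow> (i, j) \<in> S))"

definition open_node :: "nat \<Rightarrow> nat \<Rightarrow> (nat \<times> nat) set \<Rightarrow> (nat \<times> nat) set \<Rightarrow> (nat \<times> nat) set \<Rightarrow> node \<Rightarrow> bool" where
  "open_node N1 N2 F C S x \<longleftrightarrow> x \<in> nodes N1 N2 \<and> \<not> well_connected F C S x"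

definition wc_edges :: "(nat \<times> nat) set \<Rightarrow> (nat \<times> nat) set \<Rightarrow> (nat \<times> nat) set \<Rightarrow> (nat \<times> nat) set" where
  "wc_edges F C S = {(i, j) \<in> S. well_connected F C S (Sup i) \<or> well_connected F C S (Dem j)}"

definition UNO :: "nat \<Rightarrow> nat \<Rightarrow> (nat \<times> nat) set \<Rightarrow> (nat \<times> nat) set \<Rightarrow> (nat \<times> nat) set \<Rightarrow> bool" where
  "UNO N1 N2 F C S \<longleftrightarrow> (\<forall>x\<in>nodes N1 N2. \<exists>!y. (adj (wc_edges F C S))\<^sup>*\<^sup>* x y \<and> open_node N1 N2 F C S y)"

definition odd_edge :: "(nat \<times> nat) set \<Rightarrow> nat \<Rightarrow> nat \<times> nat \<Rightarrow> bool" where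
  "odd_edge C i e \<longleftrightarrow> e \<in> C \<and> odd (edge_num C (Sup i) e)"

definition SIN :: "(nat \<times> nat) set \<Rightarrow> nat \<Rightarrow> (nat \<times> nat) set \<Rightarrow> (nat \<times> nat) set \<Rightarrow> nat \<Rightarrow> bool" where
  "SIN F ds C S i \<longleftrightarrow> (\<forall>e. odd_edge C i e \<longrightarrow>
      e \<notin> S \<or> (minus_edge F ds e \<and> well_connected F C S (Dem (snd e))))"

end

theory Submission
  imports Defs "HOL-Library.Transitive_Closure_Table" "HOL-Library.Function_Algebras"
begin


abbreviation reach :: "(nat \<times> nat) set \<Rightarrow> node \<Rightarrow> node \<Rightarrow> bool" where
  "reach E \<equiv> (adj E)\<^sup>*\<^sup>*"

fun isSup :: "node \<Rightarrow> bool" where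
  "isSup (Sup _) = True" | "isSup (Dem _) = False"

lemma adj_SD[simp]: "adj E (Sup a) (Dem b) \<longleftrightarrow> (a, b) \<in> E"
  by (auto simp: adj_def)
lemma adj_DS[simp]: "adj E (Dem b) (Sup a) \<longleftrightarrow> (a, b) \<in> E"
  by (auto simp: adj_def)
lemma adj_SS[simp]: "\<not> adj E (Sup a) (Sup b)"
  by (auto simp: adj_def)
lemma adj_DD[simp]: "\<not> adj E (Dem a) (Dem b)"
  by (auto simp: adj_def)

lemma adj_sym: "adj E x y \<Longrightarrow> adj E y x"
  by (auto simp: adj_def)

lemma adj_mono: "adj E x y \<Longrightarrow> E \<subseteq> E' \<Longrightarrow> adj E' x y"
  by (auto simp: adj_def)

lemma adj_isSup: "adj E x y \<Longrightarrow> isSup x \<longleftrightarrow> \<not> isSup y"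
  by (auto simp: adj_def)

lemma reach_sym: "reach E x y \<Longrightarrow> reach E y x"
proof (induction rule: rtranclp_induct)
  case base then show ?case by simp
next
  case (step y z)
  then show ?case by (meson adj_sym converse_rtranclp_into_rtranclp)
qed

lemma reach_mono: "reach E x y \<Longrightarrow> E \<subseteq> E' \<Longrightarrow> reach E' x y"
  by (induction rule: rtranclp_induct) (auto intro: rtranclp.rtrancl_into_rtrancl adj_mono)

lemma reach_trans: "reach E x y \<Longrightarrow> reach E y z \<Longrightarrow> reach E x z"
  by (rule rtranclp_trans)

lemma reach_step: "reach E x y \<Longrightarrow> adj E y z \<Longrightarrow> reach E x z"
  by (rule rtranclp.rtrancl_into_rtrancl)

lemma reach_edge: "(a, b) \<in> E \<Longrightarrow> reach E (Sup a) (Dem b)"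
  by (simp add: r_into_rtranclp)
lemma reach_edge': "(a, b) \<in> E \<Longrightarrow> reach E (Dem b) (Sup a)"
  by (simp add: r_into_rtranclp)

lemma relpow_parity: "(adj E ^^ n) x y \<Longrightarrow> (isSup x \<longleftrightarrow> isSup y) \<longleftrightarrow> even n"
proof (induction n arbitrary: y)
  case 0 then show ?case by simp
next
  case (Suc n)
  then obtain z where "(adj E ^^ n) x z" "adj E z y" by auto
  with Suc.IH[of z] adj_isSup[of E z y] show ?case by auto
qed

definition inr :: "nat \<Rightarrow> nat \<Rightarrow> (nat \<times> nat) set \<Rightarrow> bool" where
  "inr N1 N2 E \<longleftrightarrow> E \<subseteq> {..<N1} \<times> {..<N2}"

lemma adj_nodes: "inr N1 N2 E \<Longrightarrow> adj E x y \<Longrightarrow> x \<in> nodes N1 N2 \<and> y \<in> nodes N1 N2"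
  by (auto simp: adj_def inr_def nodes_def)

lemma reach_nodes: "reach E x y \<Longrightarrow> inr N1 N2 E \<Longrightarrow> x \<in> nodes N1 N2 \<Longrightarrow> y \<in> nodes N1 N2"
  by (induction rule: rtranclp_induct) (auto dest: adj_nodes)

lemma gdist_reach: "reach E x y \<Longrightarrow> (adj E ^^ gdist E x y) x y"
  unfolding gdist_def by (meson LeastI rtranclp_imp_relpowp)

lemma gdist_le: "(adj E ^^ n) x y \<Longrightarrow> gdist E x y \<le> n"
  unfolding gdist_def by (rule Least_le)

lemma gdist_self[simp]: "gdist E x x = 0"
  using gdist_le[of 0 E x x] by simp

lemma gdist_zero: "reach E x y \<Longrightarrow> gdist E x y = 0 \<Longrightarrow> y = x"
  using gdist_reach by fastforce

lemma gdist_parity: "reach E x y \<Longrightarrow> (isSup x \<longleftrightarrow> isSup y) \<longleftrightarrow> even (gdist E x y)"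
  using gdist_reach relpow_parity by blast

lemma gdist_step: "reach E x y \<Longrightarrow> adj E y z \<Longrightarrow> gdist E x z \<le> gdist E x y + 1"
  by (metis Suc_eq_plus1 gdist_le gdist_reach relpowp_Suc_I)

lemma gdist_adj: assumes "reach E x y" "adj E y z"
  shows "gdist E x z = gdist E x y + 1 \<or> gdist E x y = gdist E x z + 1"
proof -
  have r2: "reach E x z" using assms reach_step by blast
  have 1: "gdist E x z \<le> gdist E x y + 1" using gdist_step assms by blast
  have 2: "gdist E x y \<le> gdist E x z + 1" using gdist_step[OF r2 adj_sym[OF assms(2)]] .
  have "isSup y \<longleftrightarrow> \<not> isSup z" using adj_isSup assms(2) by blast
  then have "even (gdist E x y) \<longleftrightarrow> \<not> even (gdist E x z)"
    using gdist_parity[OF assms(1)] gdist_parity[OF r2] by blast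
  with 1 2 show ?thesis by presburger
qed

lemma gdist_lower: assumes "reach E x y" "y \<noteq> x"
  shows "\<exists>w. adj E w y \<and> gdist E x w + 1 = gdist E x y \<and> reach E x w"
proof -
  obtain n where n: "gdist E x y = Suc n"
    using gdist_zero[OF assms(1)] assms(2) by (cases "gdist E x y") auto
  from gdist_reach[OF assms(1)] n obtain w where w: "(adj E ^^ n) x w" "adj E w y" by auto
  have "gdist E x w \<le> n" using gdist_le[OF w(1)] .
  moreover have "reach E x w" using w(1) relpowp_imp_rtranclp by metis
  moreover have "gdist E x y \<le> gdist E x w + 1" using gdist_step calculation(2) w(2) by blast
  ultimately show ?thesis using w n by (intro exI[of _ w]) auto
qed

lemma walk_avoid:
  assumes "(adj E ^^ k) x z" "k \<le> m"
    and "\<And>a b. (a, b) \<in> H \<Longrightarrow> gdist E x (Sup a) > m \<or> gdist E x (Dem b) > m"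
  shows "reach (E - H) x z"
  using assms(1,2)
proof (induction k arbitrary: z)
  case 0 then show ?case by simp
next
  case (Suc k)
  then obtain w where w: "(adj E ^^ k) x w" "adj E w z" by auto
  have rw: "reach (E - H) x w" using Suc w by simp
  have gw: "gdist E x w \<le> k" using gdist_le[OF w(1)] .
  have gz: "gdist E x z \<le> Suc k" using gdist_le Suc.prems(1) by blast
  have "adj (E - H) w z"
    using w(2) gw gz Suc.prems(2) by (auto simp: adj_def dest!: assms(3))
  then show ?case using rw reach_step by blast
qed


lemma card_nodes: "card (nodes N1 N2) = N1 + N2"
proof -
  have "card (Sup ` {..<N1}) = N1" by (simp add: card_image inj_on_def)
  moreover have "card (Dem ` {..<N2}) = N2" by (simp add: card_image inj_on_def)
  moreover have "Sup ` {..<N1} \<inter> Dem ` {..<N2} = {}" by auto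
  ultimately show ?thesis unfolding nodes_def by (simp add: card_Un_disjoint)
qed

lemma finite_nodes[simp]: "finite (nodes N1 N2)"
  by (simp add: nodes_def)

lemma Sup_nodes[simp]: "Sup a \<in> nodes N1 N2 \<longleftrightarrow> a < N1"
  by (auto simp: nodes_def)
lemma Dem_nodes[simp]: "Dem b \<in> nodes N1 N2 \<longleftrightarrow> b < N2"
  by (auto simp: nodes_def)

definition joins :: "nat \<times> nat \<Rightarrow> node \<Rightarrow> node \<Rightarrow> bool" where
  "joins g x w \<longleftrightarrow> (x = Sup (fst g) \<and> w = Dem (snd g)) \<or> (x = Dem (snd g) \<and> w = Sup (fst g))"

lemma adj_joins: "adj E w x \<longleftrightarrow> (\<exists>g\<in>E. joins g x w)"
  unfolding adj_def joins_def by force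

lemma joins_adj: "joins g x w \<Longrightarrow> g \<in> E \<Longrightarrow> adj E x w \<and> adj E w x"
  by (cases g) (auto simp: joins_def)

definition par_edge :: "(nat \<times> nat) set \<Rightarrow> node \<Rightarrow> node \<Rightarrow> nat \<times> nat" where
  "par_edge E r x = (SOME g. g \<in> E \<and> (\<exists>w. joins g x w \<and> gdist E r w + 1 = gdist E r x))"

lemma par_edge_prop: assumes "reach E r x" "x \<noteq> r"
  shows "par_edge E r x \<in> E \<and> (\<exists>w. joins (par_edge E r x) x w \<and> gdist E r w + 1 = gdist E r x)"
proof -
  obtain w where "adj E w x" "gdist E r w + 1 = gdist E r x"
    using gdist_lower[OF assms] by blast
  then obtain g where "g \<in> E" "joins g x w" using adj_joins by metis
  then have "\<exists>g. g \<in> E \<and> (\<exists>w. joins g x w \<and> gdist E r w + 1 = gdist E r x)"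
    using \<open>gdist E r w + 1 = gdist E r x\<close> by blast
  then show ?thesis unfolding par_edge_def by (rule someI_ex)
qed

lemma joins_same: "joins g x w \<Longrightarrow> joins g z w' \<Longrightarrow> (x = z \<and> w = w') \<or> (x = w' \<and> w = z)"
  by (cases g) (auto simp: joins_def)

lemma par_edge_inj: assumes "\<forall>x\<in>X. reach E r x" "r \<notin> X"
  shows "inj_on (par_edge E r) X"
proof
  fix x z assume x: "x \<in> X" and z: "z \<in> X" and eq: "par_edge E r x = par_edge E r z"
  obtain w where w: "joins (par_edge E r x) x w" "gdist E r w + 1 = gdist E r x"
    using par_edge_prop assms x by blast
  obtain w' where w': "joins (par_edge E r z) z w'" "gdist E r w' + 1 = gdist E r z"
    using par_edge_prop assms z by blast
  from joins_same[OF w(1) w'(1)[folded eq]] w w' show "x = z" by auto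
qed

lemma conn_card:
  assumes "inr N1 N2 E" "r \<in> nodes N1 N2" "\<forall>x\<in>nodes N1 N2. reach E r x"
  shows "N1 + N2 - 1 \<le> card E"
proof -
  have fE: "finite E" using assms(1) unfolding inr_def by (meson finite_SigmaI finite_lessThan finite_subset)
  have inj: "inj_on (par_edge E r) (nodes N1 N2 - {r})"
    by (rule par_edge_inj) (use assms(3) in auto)
  have "\<And>x. x \<in> nodes N1 N2 - {r} \<Longrightarrow> par_edge E r x \<in> E"
    using par_edge_prop assms(3) by blast
  then have sub: "par_edge E r ` (nodes N1 N2 - {r}) \<subseteq> E" by blast
  have "card (nodes N1 N2 - {r}) = N1 + N2 - 1" using card_nodes assms(2) by simp
  then show ?thesis using card_inj_on_le[OF inj sub fE] by simp
qed

definition tree :: "nat \<Rightarrow> nat \<Rightarrow> (nat \<times> nat) set \<Rightarrow> bool" where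
  "tree N1 N2 T \<longleftrightarrow> inr N1 N2 T \<and> (\<forall>x\<in>nodes N1 N2. \<forall>y\<in>nodes N1 N2. reach T x y) \<and> card T = N1 + N2 - 1"

lemma tree_finite: "tree N1 N2 T \<Longrightarrow> finite T"
  unfolding tree_def inr_def by (meson finite_SigmaI finite_lessThan finite_subset)

lemma tree_inr: "tree N1 N2 T \<Longrightarrow> inr N1 N2 T"
  unfolding tree_def by simp

lemma tree_reach: "tree N1 N2 T \<Longrightarrow> x \<in> nodes N1 N2 \<Longrightarrow> y \<in> nodes N1 N2 \<Longrightarrow> reach T x y"
  unfolding tree_def by simp

lemma tree_edge_range: "tree N1 N2 T \<Longrightarrow> (a, b) \<in> T \<Longrightarrow> a < N1 \<and> b < N2"
  unfolding tree_def inr_def by auto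

lemma tree_unique_parent:
  assumes T: "tree N1 N2 T" and r: "r \<in> nodes N1 N2"
    and a1: "adj T w1 x" and a2: "adj T w2 x"
    and g1: "gdist T r w1 + 1 = gdist T r x" and g2: "gdist T r w2 + 1 = gdist T r x"
  shows "w1 = w2"
proof -
  have fT: "finite T" using tree_finite T by blast
  have xn: "x \<in> nodes N1 N2" using adj_nodes[OF tree_inr[OF T] a1] by blast
  have reachall: "\<forall>z\<in>nodes N1 N2 - {r}. reach T r z" using tree_reach[OF T] r by blast
  have inj: "inj_on (par_edge T r) (nodes N1 N2 - {r})"
    by (rule par_edge_inj) (use reachall in auto)
  have "\<And>x. x \<in> nodes N1 N2 - {r} \<Longrightarrow> par_edge T r x \<in> T"
    using par_edge_prop reachall by blast
  then have sub: "par_edge T r ` (nodes N1 N2 - {r}) \<subseteq> T" by blast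
  have "card (par_edge T r ` (nodes N1 N2 - {r})) = card T"
    using card_image[OF inj] card_nodes r T unfolding tree_def by simp
  then have img: "par_edge T r ` (nodes N1 N2 - {r}) = T"
    using card_subset_eq[OF fT sub] by simp
  have key: "\<And>w g. adj T w x \<Longrightarrow> gdist T r w + 1 = gdist T r x \<Longrightarrow> g \<in> T \<Longrightarrow> joins g x w \<Longrightarrow> g = par_edge T r x"
  proof -
    fix w g assume aw: "adj T w x" and gw: "gdist T r w + 1 = gdist T r x" and gT: "g \<in> T" and j: "joins g x w"
    obtain z where z: "z \<in> nodes N1 N2 - {r}" "g = par_edge T r z" using img gT by blast
    obtain w' where w': "joins (par_edge T r z) z w'" "gdist T r w' + 1 = gdist T r z"
      using par_edge_prop reachall z(1) by blast
    from joins_same[OF j w'(1)[folded z(2)]] gw w' have "z = x" by auto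
    then show "g = par_edge T r x" using z by simp
  qed
  obtain g1' where "g1' \<in> T" "joins g1' x w1" using a1 adj_joins by metis
  with key[OF a1 g1] have j1: "joins (par_edge T r x) x w1" by simp
  obtain g2' where "g2' \<in> T" "joins g2' x w2" using a2 adj_joins by metis
  with key[OF a2 g2] have j2: "joins (par_edge T r x) x w2" by simp
  from joins_same[OF j1 j2] g1 g2 show ?thesis by auto
qed

lemma reach_remove_edge:
  assumes "reach T x z" "reach (T - {(a, b)}) y (Sup a)" "reach (T - {(a, b)}) y (Dem b)"
    "reach (T - {(a,b)}) y x"
  shows "reach (T - {(a, b)}) y z"
  using assms(1)
proof (induction rule: rtranclp_induct)
  case base then show ?case using assms(4) .
next
  case (step w z)
  show ?case
  proof (cases "adj (T - {(a, b)}) w z")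
    case True then show ?thesis using step reach_step by blast
  next
    case False
    then have "z = Sup a \<or> z = Dem b" using step(2) by (auto simp: adj_def)
    then show ?thesis using assms by blast
  qed
qed

lemma tree_bridge:
  assumes T: "tree N1 N2 T" and h: "(a, b) \<in> T"
  shows "\<not> reach (T - {(a, b)}) (Sup a) (Dem b)"
proof
  assume r: "reach (T - {(a, b)}) (Sup a) (Dem b)"
  have ab: "a < N1" "b < N2" using tree_edge_range[OF T h] by auto
  have "\<forall>x\<in>nodes N1 N2. reach (T - {(a, b)}) (Sup a) x"
  proof
    fix x assume "x \<in> nodes N1 N2"
    then have "reach T (Sup a) x" using tree_reach[OF T] ab by simp
    then show "reach (T - {(a, b)}) (Sup a) x"
      by (rule reach_remove_edge[OF _ _ r]) auto
  qed
  then have "N1 + N2 - 1 \<le> card (T - {(a, b)})"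
    using conn_card[of N1 N2 "T - {(a,b)}" "Sup a"] ab tree_inr[OF T] unfolding inr_def by auto
  moreover have "card (T - {(a, b)}) = card T - 1" using h tree_finite[OF T] by simp
  moreover have "card T \<ge> 1" using h tree_finite[OF T] card_0_eq by fastforce
  ultimately show False using T unfolding tree_def by simp
qed

lemma tree_two_sides:
  assumes T: "tree N1 N2 T" and h: "(a, b) \<in> T" and z: "z \<in> nodes N1 N2"
  shows "reach (T - {(a, b)}) (Sup a) z \<or> reach (T - {(a, b)}) (Dem b) z"
proof -
  have ab: "a < N1" "b < N2" using tree_edge_range[OF T h] by auto
  have "reach T (Sup a) z" using tree_reach[OF T] ab z by simp
  then show ?thesis
  proof (induction rule: rtranclp_induct)
    case base then show ?case by simp
  next
    case (step w z)
    show ?case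
    proof (cases "adj (T - {(a, b)}) w z")
      case True then show ?thesis using step reach_step by blast
    next
      case False
      then have "z = Sup a \<or> z = Dem b" using step(2) by (auto simp: adj_def)
      then show ?thesis by auto
    qed
  qed
qed

lemma tree_side_level:
  assumes T: "tree N1 N2 T" and h: "(a, b) \<in> T" and r: "r \<in> nodes N1 N2"
  shows "gdist T r (Dem b) = gdist T r (Sup a) + 1 \<longleftrightarrow> reach (T - {(a, b)}) r (Sup a)"
    and "gdist T r (Sup a) = gdist T r (Dem b) + 1 \<longleftrightarrow> reach (T - {(a, b)}) r (Dem b)"
proof -
  have ab: "a < N1" "b < N2" using tree_edge_range[OF T h] by auto
  have ra: "reach T r (Sup a)" and rb: "reach T r (Dem b)" using tree_reach[OF T] r ab by auto
  have lv: "gdist T r (Dem b) = gdist T r (Sup a) + 1 \<or> gdist T r (Sup a) = gdist T r (Dem b) + 1"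
    using gdist_adj[OF ra] h by simp
  have A: "gdist T r (Dem b) = gdist T r (Sup a) + 1 \<Longrightarrow> reach (T - {(a, b)}) r (Sup a)"
    by (rule walk_avoid[OF gdist_reach[OF ra] order_refl]) auto
  have B: "gdist T r (Sup a) = gdist T r (Dem b) + 1 \<Longrightarrow> reach (T - {(a, b)}) r (Dem b)"
    by (rule walk_avoid[OF gdist_reach[OF rb] order_refl]) auto
  have nb: "\<not> (reach (T - {(a, b)}) r (Sup a) \<and> reach (T - {(a, b)}) r (Dem b))"
    using tree_bridge[OF T h] reach_sym reach_trans by metis
  show "gdist T r (Dem b) = gdist T r (Sup a) + 1 \<longleftrightarrow> reach (T - {(a, b)}) r (Sup a)"
    using A B nb lv by auto
  show "gdist T r (Sup a) = gdist T r (Dem b) + 1 \<longleftrightarrow> reach (T - {(a, b)}) r (Dem b)"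
    using A B nb lv by auto
qed


locale setting =
  fixes N1 N2 :: nat and u v :: "nat \<Rightarrow> real"
  assumes N1: "N1 \<ge> 1" and N2: "N2 \<ge> 1"
    and upos: "\<forall>a<N1. u a > 0" and vpos: "\<forall>b<N2. v b > 0"
    and tot: "(\<Sum>a<N1. u a) = (\<Sum>b<N2. v b)"
    and nondeg: "non_degenerate N1 N2 u v"
begin

lemma sum_pos_u: "I \<subseteq> {..<N1} \<Longrightarrow> I \<noteq> {} \<Longrightarrow> sum u I > 0"
  using upos by (intro sum_pos) (auto intro: finite_subset[of _ "{..<N1}"])
lemma sum_pos_v: "J \<subseteq> {..<N2} \<Longrightarrow> J \<noteq> {} \<Longrightarrow> sum v J > 0"
  using vpos by (intro sum_pos) (auto intro: finite_subset[of _ "{..<N2}"])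

lemma sum_lemma:
  assumes I: "I \<subseteq> {..<N1}" and J: "J \<subseteq> {..<N2}" and eq: "sum u I = sum v J"
    and ne: "I \<noteq> {} \<or> J \<noteq> {}"
  shows "I = {..<N1} \<and> J = {..<N2}"
proof -
  have In: "I \<noteq> {}" using sum_pos_v[OF J] eq ne by force
  have Jn: "J \<noteq> {}" using sum_pos_u[OF I] eq ne by force
  have "I = {..<N1} \<or> J = {..<N2}"
    using nondeg In Jn I J eq unfolding non_degenerate_def by (metis psubsetI)
  moreover have "I = {..<N1} \<Longrightarrow> J = {..<N2}"
  proof (rule ccontr)
    assume a: "I = {..<N1}" "J \<noteq> {..<N2}"
    have "sum v {..<N2} = sum v J + sum v ({..<N2} - J)"
      using sum.subset_diff[OF J] by (simp add: add.commute)
    moreover have "sum v ({..<N2} - J) > 0" using sum_pos_v a J by auto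
    ultimately show False using eq a tot by simp
  qed
  moreover have "J = {..<N2} \<Longrightarrow> I = {..<N1}"
  proof (rule ccontr)
    assume a: "J = {..<N2}" "I \<noteq> {..<N1}"
    have "sum u {..<N1} = sum u I + sum u ({..<N1} - I)"
      using sum.subset_diff[OF I] by (simp add: add.commute)
    moreover have "sum u ({..<N1} - I) > 0" using sum_pos_u a I by auto
    ultimately show False using eq a tot by simp
  qed
  ultimately show ?thesis by blast
qed

lemma TP_nonneg: "y \<in> TP N1 N2 u v \<Longrightarrow> 0 \<le> y a b"
  by (simp add: TP_def)
lemma TP_row: "y \<in> TP N1 N2 u v \<Longrightarrow> a < N1 \<Longrightarrow> (\<Sum>b<N2. y a b) = u a"
  by (simp add: TP_def)
lemma TP_col: "y \<in> TP N1 N2 u v \<Longrightarrow> b < N2 \<Longrightarrow> (\<Sum>a<N1. y a b) = v b"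
  by (simp add: TP_def)
lemma TP_out: "y \<in> TP N1 N2 u v \<Longrightarrow> \<not> (a < N1 \<and> b < N2) \<Longrightarrow> y a b = 0"
  by (simp add: TP_def)

lemma supp_inr: "y \<in> TP N1 N2 u v \<Longrightarrow> inr N1 N2 (supp y)"
  unfolding inr_def supp_def using TP_out by fastforce

lemma closed_all:
  assumes y1: "y1 \<in> TP N1 N2 u v" and y2: "y2 \<in> TP N1 N2 u v"
    and I: "I \<subseteq> {..<N1}" and J: "J \<subseteq> {..<N2}"
    and c1: "\<And>a b. a \<in> I \<Longrightarrow> b < N2 \<Longrightarrow> y1 a b \<noteq> 0 \<Longrightarrow> b \<in> J"
    and c2: "\<And>a b. b \<in> J \<Longrightarrow> a < N1 \<Longrightarrow> y2 a b \<noteq> 0 \<Longrightarrow> a \<in> I"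
    and ne: "I \<noteq> {} \<or> J \<noteq> {}"
  shows "I = {..<N1} \<and> J = {..<N2}"
proof -
  have fI: "finite I" and fJ: "finite J" using I J finite_subset by auto
  have "sum u I = (\<Sum>a\<in>I. \<Sum>b<N2. y1 a b)"
    using TP_row[OF y1] I by (intro sum.cong) auto
  also have "\<dots> = (\<Sum>a\<in>I. \<Sum>b\<in>J. y1 a b)"
  proof (rule sum.cong[OF refl])
    fix a assume "a \<in> I"
    then show "(\<Sum>b<N2. y1 a b) = (\<Sum>b\<in>J. y1 a b)"
      using c1 J by (intro sum.mono_neutral_right) auto
  qed
  also have "\<dots> = (\<Sum>b\<in>J. \<Sum>a\<in>I. y1 a b)" by (rule sum.swap)
  also have "\<dots> \<le> (\<Sum>b\<in>J. \<Sum>a<N1. y1 a b)"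
    by (intro sum_mono sum_mono2) (use I TP_nonneg[OF y1] in auto)
  also have "\<dots> = sum v J" using TP_col[OF y1] J by (intro sum.cong) auto
  finally have le1: "sum u I \<le> sum v J" .
  have "sum v J = (\<Sum>b\<in>J. \<Sum>a<N1. y2 a b)"
    using TP_col[OF y2] J by (intro sum.cong) auto
  also have "\<dots> = (\<Sum>b\<in>J. \<Sum>a\<in>I. y2 a b)"
  proof (rule sum.cong[OF refl])
    fix b assume "b \<in> J"
    then show "(\<Sum>a<N1. y2 a b) = (\<Sum>a\<in>I. y2 a b)"
      using c2 I by (intro sum.mono_neutral_right) auto
  qed
  also have "\<dots> = (\<Sum>a\<in>I. \<Sum>b\<in>J. y2 a b)" by (rule sum.swap)
  also have "\<dots> \<le> (\<Sum>a\<in>I. \<Sum>b<N2. y2 a b)"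
    by (intro sum_mono sum_mono2) (use J TP_nonneg[OF y2] in auto)
  also have "\<dots> = sum u I" using TP_row[OF y2] I by (intro sum.cong) auto
  finally have le2: "sum v J \<le> sum u I" .
  show ?thesis using sum_lemma[OF I J _ ne] le1 le2 by simp
qed

lemma supp_connected:
  assumes y: "y \<in> TP N1 N2 u v"
  shows "\<forall>x\<in>nodes N1 N2. \<forall>z\<in>nodes N1 N2. reach (supp y) x z"
proof -
  define I where "I = {a. a < N1 \<and> reach (supp y) (Sup 0) (Sup a)}"
  define J where "J = {b. b < N2 \<and> reach (supp y) (Sup 0) (Dem b)}"
  have "I = {..<N1} \<and> J = {..<N2}"
  proof (rule closed_all[OF y y])
    show "I \<subseteq> {..<N1}" "J \<subseteq> {..<N2}" unfolding I_def J_def by auto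
    have "0 \<in> I" using N1 unfolding I_def by auto
    then show "I \<noteq> {} \<or> J \<noteq> {}" by blast
  next
    fix a b assume "a \<in> I" "b < N2" "y a b \<noteq> 0"
    then show "b \<in> J" unfolding I_def J_def supp_def by (auto intro: reach_step)
  next
    fix a b assume "b \<in> J" "a < N1" "y a b \<noteq> 0"
    then show "a \<in> I" unfolding I_def J_def supp_def by (auto intro: reach_step)
  qed
  then have all: "\<forall>z\<in>nodes N1 N2. reach (supp y) (Sup 0) z"
    unfolding I_def J_def nodes_def by auto
  show ?thesis using all reach_sym reach_trans by blast
qed

lemma supp_card_ge:
  assumes y: "y \<in> TP N1 N2 u v"
  shows "N1 + N2 - 1 \<le> card (supp y)"
  using conn_card[OF supp_inr[OF y], of "Sup 0"] supp_connected[OF y] N1 by auto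

end


definition col :: "nat \<times> nat \<Rightarrow> node \<Rightarrow> real" where
  "col g = (\<lambda>z. (if z = Sup (fst g) then 1 else 0) + (if z = Dem (snd g) then 1 else 0))"

definition fscale :: "real \<Rightarrow> (node \<Rightarrow> real) \<Rightarrow> (node \<Rightarrow> real)" where
  "fscale c f = (\<lambda>z. c * f z)"

interpretation fvs: vector_space fscale
  by unfold_locales (auto simp: fscale_def algebra_simps plus_fun_def)

lemma col_inj: "inj col"
proof
  fix g h assume e: "col g = col h"
  have "col g (Sup (fst g)) = col h (Sup (fst g))" "col g (Dem (snd g)) = col h (Dem (snd g))"
    using e by auto
  then show "g = h" unfolding col_def by (cases g, cases h) (auto split: if_splits)
qed

lemma sum_fun_apply: "finite A \<Longrightarrow> (\<Sum>x\<in>A. f x) z = (\<Sum>x\<in>A. f x z)"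
  for f :: "'a \<Rightarrow> node \<Rightarrow> real"
  by (induction A rule: finite_induct) (auto simp: plus_fun_def)

context setting begin

lemma kernel_vector:
  assumes E: "inr N1 N2 E" and big: "card E > N1 + N2 - 1"
  shows "\<exists>d :: nat \<Rightarrow> nat \<Rightarrow> real. (\<forall>a b. d a b \<noteq> 0 \<longrightarrow> (a, b) \<in> E) \<and> (\<exists>a b. d a b \<noteq> 0) \<and>
     (\<forall>a<N1. (\<Sum>b<N2. d a b) = 0) \<and> (\<forall>b<N2. (\<Sum>a<N1. d a b) = 0)"
proof -
  define G where "G = {..<N1} \<times> {..<N2}"
  have EG: "E \<subseteq> G" using E unfolding inr_def G_def .
  have fG: "finite G" unfolding G_def by simp
  have fE: "finite E" using EG fG finite_subset by blast
  define K where "K = ({..<N1} \<times> {0}) \<union> ({0} \<times> {1..<N2})"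
  have cK: "card K \<le> N1 + N2 - 1"
  proof -
    have "card K \<le> card ({..<N1} \<times> {0::nat}) + card ({0::nat} \<times> {1..<N2})"
      unfolding K_def by (rule card_Un_le)
    also have "\<dots> = N1 + (N2 - 1)" by (simp add: card_cartesian_product)
    finally show ?thesis using N2 by simp
  qed
  define B0 where "B0 = col ` K"
  have fB0: "finite B0" unfolding B0_def K_def by simp
  have cB0: "card B0 \<le> N1 + N2 - 1" unfolding B0_def using card_image_le[of K col] cK
    unfolding K_def by simp
  have colsum: "col (a, b) = col (a, 0) + col (0, b) - col (0, 0)" for a b
    by (rule ext) (auto simp: col_def)
  have inspan: "col ` E \<subseteq> fvs.span B0"
  proof
    fix x assume "x \<in> col ` E"
    then obtain a b where ab: "(a, b) \<in> E" "x = col (a, b)" by auto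
    have a: "a < N1" and b: "b < N2" using ab EG G_def by auto
    have s0: "col (0, 0) \<in> fvs.span B0" using N1 by (intro fvs.span_base) (auto simp: B0_def K_def)
    have s1: "col (a, 0) \<in> fvs.span B0" using a by (intro fvs.span_base) (auto simp: B0_def K_def)
    have s2: "col (0, b) \<in> fvs.span B0"
    proof (cases "b = 0")
      case True then show ?thesis using s0 by simp
    next
      case False then show ?thesis using b by (intro fvs.span_base) (auto simp: B0_def K_def)
    qed
    show "x \<in> fvs.span B0" using ab colsum fvs.span_add[OF s1 s2] fvs.span_diff s0 by metis
  qed
  have "\<not> fvs.independent (col ` E)"
  proof
    assume "fvs.independent (col ` E)"
    then have "card (col ` E) \<le> card B0" using fvs.independent_span_bound[OF fB0 _ inspan] by blast
    moreover have "card (col ` E) = card E" using col_inj by (simp add: card_image inj_on_subset)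
    ultimately show False using big cB0 by simp
  qed
  then obtain t U where t: "finite t" "t \<subseteq> col ` E" "(\<Sum>v\<in>t. fscale (U v) v) = 0" "\<exists>v\<in>t. U v \<noteq> 0"
    unfolding fvs.dependent_explicit by blast
  define Et where "Et = {g \<in> E. col g \<in> t}"
  have tEt: "t = col ` Et" using t(2) unfolding Et_def by auto
  define d where "d a b = (if (a, b) \<in> Et then U (col (a, b)) else 0)" for a b
  have "(\<Sum>v\<in>t. fscale (U v) v) = (\<Sum>g\<in>Et. fscale (U (col g)) (col g))"
    unfolding tEt by (rule sum.reindex_cong[OF inj_on_subset[OF col_inj]]) auto
  also have "\<dots> = (\<Sum>g\<in>G. fscale (d (fst g) (snd g)) (col g))"
  proof (rule sum.mono_neutral_cong_left[OF fG])
    show "Et \<subseteq> G" using EG unfolding Et_def by auto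
    show "\<forall>g\<in>G - Et. fscale (d (fst g) (snd g)) (col g) = 0"
      by (auto simp: d_def fscale_def zero_fun_def)
    show "\<And>g. g \<in> Et \<Longrightarrow> fscale (U (col g)) (col g) = fscale (d (fst g) (snd g)) (col g)"
      by (auto simp: d_def)
  qed
  finally have S0: "(\<Sum>g\<in>G. fscale (d (fst g) (snd g)) (col g)) = 0" using t(3) by simp
  have evalS: "(\<Sum>g\<in>G. d (fst g) (snd g) * col g z) = 0" for z
  proof -
    have "(\<Sum>g\<in>G. fscale (d (fst g) (snd g)) (col g)) z = 0" using S0 by (simp add: zero_fun_def)
    then show ?thesis using sum_fun_apply[OF fG] by (simp add: fscale_def)
  qed
  have row: "(\<Sum>b<N2. d x b) = 0" if x: "x < N1" for x
  proof -
    have "0 = (\<Sum>g\<in>G. d (fst g) (snd g) * col g (Sup x))" using evalS by simp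
    also have "\<dots> = (\<Sum>a<N1. \<Sum>b<N2. d a b * col (a, b) (Sup x))"
      unfolding G_def by (simp add: sum.cartesian_product case_prod_beta)
    also have "\<dots> = (\<Sum>a<N1. \<Sum>b<N2. if a = x then d a b else 0)"
      by (intro sum.cong) (auto simp: col_def)
    also have "\<dots> = (\<Sum>a<N1. if a = x then (\<Sum>b<N2. d a b) else 0)"
      by (intro sum.cong) auto
    also have "\<dots> = (\<Sum>b<N2. d x b)" using x by simp
    finally show ?thesis by simp
  qed
  have column: "(\<Sum>a<N1. d a x) = 0" if x: "x < N2" for x
  proof -
    have "0 = (\<Sum>g\<in>G. d (fst g) (snd g) * col g (Dem x))" using evalS by simp
    also have "\<dots> = (\<Sum>a<N1. \<Sum>b<N2. d a b * col (a, b) (Dem x))"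
      unfolding G_def by (simp add: sum.cartesian_product case_prod_beta)
    also have "\<dots> = (\<Sum>a<N1. \<Sum>b<N2. if b = x then d a b else 0)"
      by (intro sum.cong) (auto simp: col_def)
    also have "\<dots> = (\<Sum>a<N1. d a x)" using x by simp
    finally show ?thesis by simp
  qed
  have nz: "\<exists>a b. d a b \<noteq> 0"
  proof -
    obtain v where v: "v \<in> t" "U v \<noteq> 0" using t(4) by blast
    then obtain g where "g \<in> Et" "v = col g" using tEt by auto
    then show ?thesis using v by (intro exI[of _ "fst g"] exI[of _ "snd g"]) (auto simp: d_def)
  qed
  have sp: "\<forall>a b. d a b \<noteq> 0 \<longrightarrow> (a, b) \<in> E" unfolding d_def Et_def by auto
  show ?thesis using sp nz row column by blast
qed

lemma vertex_card:
  assumes vx: "is_vertex N1 N2 u v y"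
  shows "card (supp y) \<le> N1 + N2 - 1"
proof (rule ccontr)
  assume nt: "\<not> ?thesis"
  have y: "y \<in> TP N1 N2 u v" using vx is_vertex_def by blast
  have big: "card (supp y) > N1 + N2 - 1" using nt by simp
  obtain d :: "nat \<Rightarrow> nat \<Rightarrow> real" where sp: "\<forall>a b. d a b \<noteq> 0 \<longrightarrow> (a, b) \<in> supp y" and nz: "\<exists>a b. d a b \<noteq> 0"
     and row: "\<forall>a<N1. (\<Sum>b<N2. d a b) = 0" and column: "\<forall>b<N2. (\<Sum>a<N1. d a b) = 0"
    using kernel_vector[OF supp_inr[OF y] big] by blast
  define D where "D = {g \<in> supp y. d (fst g) (snd g) \<noteq> 0}"
  have "finite (supp y)" using supp_inr[OF y] unfolding inr_def by (rule finite_subset) simp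
  then have fD: "finite D" unfolding D_def by simp
  have neD: "D \<noteq> {}" using nz sp unfolding D_def by fastforce
  define eps where "eps = Min ((\<lambda>g. y (fst g) (snd g) / \<bar>d (fst g) (snd g)\<bar>) ` D)"
  have epos: "eps > 0" unfolding eps_def
  proof (subst Min_gr_iff)
    show "finite ((\<lambda>g. y (fst g) (snd g) / \<bar>d (fst g) (snd g)\<bar>) ` D)" using fD by simp
    show "(\<lambda>g. y (fst g) (snd g) / \<bar>d (fst g) (snd g)\<bar>) ` D \<noteq> {}" using neD by simp
    show "\<forall>x\<in>(\<lambda>g. y (fst g) (snd g) / \<bar>d (fst g) (snd g)\<bar>) ` D. 0 < x"
      unfolding D_def supp_def using TP_nonneg[OF y] by (auto intro!: divide_pos_pos simp: less_le)
  qed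
  have bound: "eps * \<bar>d a b\<bar> \<le> y a b" for a b
  proof (cases "d a b = 0")
    case True then show ?thesis using TP_nonneg[OF y] by simp
  next
    case False
    then have "(a, b) \<in> D" using sp unfolding D_def by auto
    then have "eps \<le> y a b / \<bar>d a b\<bar>" unfolding eps_def using fD by (intro Min_le) (auto simp: image_iff intro!: bexI[of _ "(a, b)"])
    then show ?thesis using False by (simp add: le_divide_eq)
  qed
  define p where "p = (\<lambda>a b. y a b + eps * d a b)"
  define q where "q = (\<lambda>a b. y a b - eps * d a b)"
  have dout: "\<not> (a < N1 \<and> b < N2) \<Longrightarrow> d a b = 0" for a b
    using sp supp_inr[OF y] unfolding inr_def by blast
  have pT: "p \<in> TP N1 N2 u v"
  proof -
    have "0 \<le> p a b" for a b
      using bound[of a b] abs_le_iff[of "d a b"] epos unfolding p_def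
      by (smt (verit, best) mult_left_mono mult_minus_right)
    moreover have "(\<Sum>b<N2. p a b) = u a" if "a < N1" for a
      using row that TP_row[OF y that] by (simp add: p_def sum.distrib sum_distrib_left[symmetric])
    moreover have "(\<Sum>a<N1. p a b) = v b" if "b < N2" for b
      using column that TP_col[OF y that] by (simp add: p_def sum.distrib sum_distrib_left[symmetric])
    ultimately show ?thesis unfolding TP_def using TP_out[OF y] dout by (auto simp: p_def)
  qed
  have qT: "q \<in> TP N1 N2 u v"
  proof -
    have "0 \<le> q a b" for a b
      using bound[of a b] abs_le_iff[of "d a b"] epos unfolding q_def
      by (smt (verit, best) mult_left_mono mult_minus_right)
    moreover have "(\<Sum>b<N2. q a b) = u a" if "a < N1" for a
      using row that TP_row[OF y that] by (simp add: q_def sum_subtractf sum_distrib_left[symmetric])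
    moreover have "(\<Sum>a<N1. q a b) = v b" if "b < N2" for b
      using column that TP_col[OF y that] by (simp add: q_def sum_subtractf sum_distrib_left[symmetric])
    ultimately show ?thesis unfolding TP_def using TP_out[OF y] dout by (auto simp: q_def)
  qed
  have "\<forall>a b. y a b = (p a b + q a b) / 2" unfolding p_def q_def by simp
  then have "p = q" using vx pT qT unfolding is_vertex_def by blast
  then have pq: "p a b = q a b" for a b by simp
  have "eps * d a b = 0" for a b using pq[of a b] unfolding p_def q_def by linarith
  then have "d a b = 0" for a b using epos by simp
  then show False using nz by blast
qed

lemma vertex_tree_tree:
  assumes "vertex_tree N1 N2 u v C"
  shows "tree N1 N2 C"
proof -
  obtain y where vx: "is_vertex N1 N2 u v y" and sC: "supp y = C"
    using assms unfolding vertex_tree_def by blast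
  have y: "y \<in> TP N1 N2 u v" using vx is_vertex_def by blast
  show ?thesis unfolding tree_def using supp_inr[OF y] supp_connected[OF y] supp_card_ge[OF y]
      vertex_card[OF vx] sC by auto
qed

end


lemma reach_avoid_S:
  assumes "reach E x y" "\<not> reach E x (Sup a)"
  shows "reach (E - {(a, b)}) x y"
  using assms
proof (induction rule: rtranclp_induct)
  case base then show ?case by simp
next
  case (step w z)
  have "adj (E - {(a, b)}) w z"
  proof -
    have "z \<noteq> Sup a" using step by (metis reach_step)
    moreover have "w \<noteq> Sup a" using step by blast
    ultimately show ?thesis using step(2) by (auto simp: adj_def)
  qed
  then show ?case using step reach_step by blast
qed

lemma reach_avoid_D:
  assumes "reach E x y" "\<not> reach E x (Dem b)"
  shows "reach (E - {(a, b)}) x y"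
  using assms
proof (induction rule: rtranclp_induct)
  case base then show ?case by simp
next
  case (step w z)
  have "adj (E - {(a, b)}) w z"
  proof -
    have "z \<noteq> Dem b" using step by (metis reach_step)
    moreover have "w \<noteq> Dem b" using step by blast
    ultimately show ?thesis using step(2) by (auto simp: adj_def)
  qed
  then show ?case using step reach_step by blast
qed

lemma reach_cross:
  assumes "reach E x y"
  shows "reach (E - {(a, b)}) x y \<or> reach (E - {(a, b)}) x (Sup a) \<or> reach (E - {(a, b)}) x (Dem b)"
  using assms
proof (induction rule: rtranclp_induct)
  case base then show ?case by simp
next
  case (step w z)
  show ?case
  proof (cases "adj (E - {(a, b)}) w z")
    case True then show ?thesis using step reach_step by blast
  next
    case False
    then have "(w = Sup a \<and> z = Dem b) \<or> (w = Dem b \<and> z = Sup a)" using step(2) by (auto simp: adj_def)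
    then show ?thesis using step by blast
  qed
qed

lemma tree_refine:
  assumes T: "tree N1 N2 T" and h: "(a, b) \<in> T" and ET: "E \<subseteq> T"
    and r1: "reach E x w" and r2: "reach (T - {(a, b)}) x w" and w: "w = Sup a \<or> w = Dem b"
  shows "reach (E - {(a, b)}) x w"
proof -
  have br: "\<not> reach (T - {(a, b)}) (Sup a) (Dem b)" using tree_bridge[OF T h] .
  have mono: "reach (E - {(a, b)}) x p \<Longrightarrow> reach (T - {(a, b)}) x p" for p
    using reach_mono ET by blast
  from reach_cross[OF r1, of a b] show ?thesis
  proof (elim disjE)
    assume "reach (E - {(a, b)}) x (Sup a)"
    then show ?thesis
      using w mono r2 br reach_sym reach_trans by metis
  next
    assume "reach (E - {(a, b)}) x (Dem b)"
    then show ?thesis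
      using w mono r2 br reach_sym reach_trans by metis
  qed simp
qed

lemma tree_side_unique:
  assumes T: "tree N1 N2 T" and h: "(a, b) \<in> T"
  shows "\<not> (reach (T - {(a, b)}) x (Sup a) \<and> reach (T - {(a, b)}) x (Dem b))"
  using tree_bridge[OF T h] reach_sym reach_trans by metis

lemma odd_edge_iff:
  assumes C: "tree N1 N2 C" and i: "i < N1"
  shows "odd_edge C i g \<longleftrightarrow> g \<in> C \<and> reach (C - {g}) (Sup i) (Sup (fst g))"
proof (cases "g \<in> C")
  case False then show ?thesis by (simp add: odd_edge_def)
next
  case True
  obtain a b where g: "g = (a, b)" by (cases g)
  have ab: "a < N1" "b < N2" using tree_edge_range[OF C] True g by auto
  have ra: "reach C (Sup i) (Sup a)" and rb: "reach C (Sup i) (Dem b)"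
    using tree_reach[OF C] i ab by auto
  have pa: "even (gdist C (Sup i) (Sup a))" using gdist_parity[OF ra] by simp
  have pb: "odd (gdist C (Sup i) (Dem b))" using gdist_parity[OF rb] by simp
  have lv: "gdist C (Sup i) (Dem b) = gdist C (Sup i) (Sup a) + 1 \<or>
            gdist C (Sup i) (Sup a) = gdist C (Sup i) (Dem b) + 1"
    using gdist_adj[OF ra] True g by simp
  have "odd_edge C i g \<longleftrightarrow> gdist C (Sup i) (Dem b) = gdist C (Sup i) (Sup a) + 1"
    unfolding odd_edge_def edge_num_def g using True g pa pb lv by (auto simp: max_def)
  also have "\<dots> \<longleftrightarrow> reach (C - {g}) (Sup i) (Sup (fst g))"
    using tree_side_level(1)[OF C True[unfolded g]] i g by simp
  finally show ?thesis using True by simp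
qed

lemma plus_edge_lvl:
  assumes F: "tree N1 N2 F" and ds: "ds < N2"
  shows "plus_edge F ds (a, b) \<longleftrightarrow> (a, b) \<in> F \<and> gdist F (Dem ds) (Sup a) = gdist F (Dem ds) (Dem b) + 1"
    and "minus_edge F ds (a, b) \<longleftrightarrow> (a, b) \<in> F \<and> gdist F (Dem ds) (Dem b) = gdist F (Dem ds) (Sup a) + 1"
proof -
  { assume h: "(a, b) \<in> F"
    have ab: "a < N1" "b < N2" using tree_edge_range[OF F h] by auto
    have ra: "reach F (Dem ds) (Sup a)" and rb: "reach F (Dem ds) (Dem b)"
      using tree_reach[OF F] ds ab by auto
    have pa: "odd (gdist F (Dem ds) (Sup a))" using gdist_parity[OF ra] by simp
    have pb: "even (gdist F (Dem ds) (Dem b))" using gdist_parity[OF rb] by simp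
    have lv: "gdist F (Dem ds) (Dem b) = gdist F (Dem ds) (Sup a) + 1 \<or>
            gdist F (Dem ds) (Sup a) = gdist F (Dem ds) (Dem b) + 1"
      using gdist_adj[OF ra] h by simp
    let ?A = "gdist F (Dem ds) (Sup a)" and ?B = "gdist F (Dem ds) (Dem b)"
    have res: "(odd (edge_num F (Dem ds) (a, b)) \<longleftrightarrow> ?A = ?B + 1) \<and> (even (edge_num F (Dem ds) (a, b)) \<longleftrightarrow> ?B = ?A + 1)"
      using lv
    proof (elim disjE)
      assume l: "?B = ?A + 1"
      then have "edge_num F (Dem ds) (a, b) = ?B" unfolding edge_num_def by simp
      then show ?thesis using l pb by auto
    next
      assume l: "?A = ?B + 1"
      then have "edge_num F (Dem ds) (a, b) = ?A" unfolding edge_num_def by simp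
      then show ?thesis using l pa by auto
    qed
    note res }
  then show "plus_edge F ds (a, b) \<longleftrightarrow> (a, b) \<in> F \<and> gdist F (Dem ds) (Sup a) = gdist F (Dem ds) (Dem b) + 1"
    and "minus_edge F ds (a, b) \<longleftrightarrow> (a, b) \<in> F \<and> gdist F (Dem ds) (Dem b) = gdist F (Dem ds) (Sup a) + 1"
    unfolding plus_edge_def minus_edge_def by blast+
qed


inductive_set Cl :: "(nat \<times> nat) set \<Rightarrow> nat \<Rightarrow> (nat \<times> nat) set \<Rightarrow> (nat \<times> nat) set \<Rightarrow> node \<Rightarrow> node set"
  for F ds C S r where
  Cl_root: "r \<in> Cl F ds C S r"
| Cl_step: "z \<in> Cl F ds C S r \<Longrightarrow> adj S z w \<Longrightarrow> gdist F (Dem ds) w = gdist F (Dem ds) z + 1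
    \<Longrightarrow> well_connected F C S w \<Longrightarrow> w \<in> Cl F ds C S r"

lemma wc_Sup: "well_connected F C S (Sup a) \<longleftrightarrow> (\<forall>b. (a, b) \<in> F \<longrightarrow> (a, b) \<in> C \<and> (a, b) \<in> S)"
  by (simp add: well_connected_def)
lemma wc_Dem: "well_connected F C S (Dem b) \<longleftrightarrow> (\<forall>a. (a, b) \<in> C \<longrightarrow> (a, b) \<in> S)"
  by (simp add: well_connected_def)

locale fsetting = setting N1 N2 u v for N1 N2 u v +
  fixes F :: "(nat \<times> nat) set" and ds :: nat
  assumes vtF: "vertex_tree N1 N2 u v F" and ds: "ds < N2"
begin

abbreviation LF where "LF \<equiv> gdist F (Dem ds)"

lemma Ftree: "tree N1 N2 F" using vertex_tree_tree[OF vtF] .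

lemma yF_ex: "\<exists>yF. yF \<in> TP N1 N2 u v \<and> supp yF = F"
  using vtF unfolding vertex_tree_def is_vertex_def by blast

lemma dsn: "Dem ds \<in> nodes N1 N2" using ds by simp

lemma F_adj_lvl: "adj F x z \<Longrightarrow> LF z = LF x + 1 \<or> LF x = LF z + 1"
  using gdist_adj tree_reach[OF Ftree dsn] adj_nodes[OF tree_inr[OF Ftree]] by blast

lemma F_unique_parent: "adj F w1 x \<Longrightarrow> adj F w2 x \<Longrightarrow> LF w1 + 1 = LF x \<Longrightarrow> LF w2 + 1 = LF x \<Longrightarrow> w1 = w2"
  using tree_unique_parent[OF Ftree dsn] by blast

lemma plus_lvl: "plus_edge F ds (a, b) \<longleftrightarrow> (a, b) \<in> F \<and> LF (Sup a) = LF (Dem b) + 1"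
  using plus_edge_lvl[OF Ftree ds] by blast
lemma minus_lvl: "minus_edge F ds (a, b) \<longleftrightarrow> (a, b) \<in> F \<and> LF (Dem b) = LF (Sup a) + 1"
  using plus_edge_lvl[OF Ftree ds] by blast

lemma plus_or_minus: "(a, b) \<in> F \<Longrightarrow> plus_edge F ds (a, b) \<or> minus_edge F ds (a, b)"
  using F_adj_lvl[of "Sup a" "Dem b"] plus_lvl minus_lvl by auto

lemma plus_not_minus: "plus_edge F ds g \<Longrightarrow> \<not> minus_edge F ds g"
  using plus_lvl minus_lvl by (cases g) auto

lemma plus_unique: "plus_edge F ds (a, b) \<Longrightarrow> plus_edge F ds (a, b') \<Longrightarrow> b = b'"
  using F_unique_parent[of "Dem b" "Sup a" "Dem b'"] plus_lvl by auto

lemma minus_unique: "minus_edge F ds (a, b) \<Longrightarrow> minus_edge F ds (a', b) \<Longrightarrow> a = a'"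
  using F_unique_parent[of "Sup a" "Dem b" "Sup a'"] minus_lvl by auto

lemma plus_exists: "a < N1 \<Longrightarrow> \<exists>b. plus_edge F ds (a, b)"
proof -
  assume a: "a < N1"
  have "reach F (Dem ds) (Sup a)" using tree_reach[OF Ftree dsn] a by simp
  then obtain w where "adj F w (Sup a)" "LF w + 1 = LF (Sup a)"
    using gdist_lower by blast
  then show ?thesis using plus_lvl by (cases w) auto
qed

lemma minus_exists: "b < N2 \<Longrightarrow> b \<noteq> ds \<Longrightarrow> \<exists>a. minus_edge F ds (a, b)"
proof -
  assume b: "b < N2" "b \<noteq> ds"
  have "reach F (Dem ds) (Dem b)" using tree_reach[OF Ftree dsn] b by simp
  then obtain w where "adj F w (Dem b)" "LF w + 1 = LF (Dem b)"
    using gdist_lower b by blast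
  then show ?thesis using minus_lvl by (cases w) auto
qed

lemma minus_not_ds: "minus_edge F ds (a, b) \<Longrightarrow> b \<noteq> ds"
  using minus_lvl by auto

lemma Cl_level: "x \<in> Cl F ds C S r \<Longrightarrow> LF r \<le> LF x \<and> (x \<noteq> r \<longrightarrow> LF r < LF x)"
  by (induction rule: Cl.induct) auto

lemma Cl_parent:
  assumes SF: "S \<subseteq> F" and x: "x \<in> Cl F ds C S r" "x \<noteq> r" and w: "adj F w x" "LF w + 1 = LF x"
  shows "w \<in> Cl F ds C S r"
  using x
proof (cases rule: Cl.cases)
  case Cl_root then show ?thesis using x by simp
next
  case (Cl_step z)
  have "adj F z x" using Cl_step(2) adj_mono SF adj_sym by blast
  then have "z = w" using F_unique_parent w Cl_step(3) by simp
  then show ?thesis using Cl_step by simp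
qed

lemma Cl_wc: "x \<in> Cl F ds C S r \<Longrightarrow> x \<noteq> r \<Longrightarrow> well_connected F C S x"
  by (induction rule: Cl.induct) auto

lemma Cl_mono': "x \<in> Cl F ds C S r' \<Longrightarrow> r' \<in> Cl F ds C S r \<Longrightarrow> x \<in> Cl F ds C S r"
  by (induction rule: Cl.induct) (auto intro: Cl.intros)
lemma Cl_mono: "r' \<in> Cl F ds C S r \<Longrightarrow> x \<in> Cl F ds C S r' \<Longrightarrow> x \<in> Cl F ds C S r"
  using Cl_mono' by blast

lemma Cl_nodes': "x \<in> Cl F ds C S r \<Longrightarrow> inr N1 N2 S \<Longrightarrow> r \<in> nodes N1 N2 \<Longrightarrow> x \<in> nodes N1 N2"
  by (induction rule: Cl.induct) (auto dest: adj_nodes)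
lemma Cl_nodes: "inr N1 N2 S \<Longrightarrow> r \<in> nodes N1 N2 \<Longrightarrow> x \<in> Cl F ds C S r \<Longrightarrow> x \<in> nodes N1 N2"
  using Cl_nodes' by blast

definition noplusP :: "(nat \<times> nat) set \<Rightarrow> (nat \<times> nat) set \<Rightarrow> bool" where
  "noplusP C2 S2 \<longleftrightarrow> (\<forall>a b. (a, b) \<in> S2 \<longrightarrow> plus_edge F ds (a, b) \<longrightarrow> well_connected F C2 S2 (Sup a))"
definition invP :: "(nat \<times> nat) set \<Rightarrow> (nat \<times> nat) set \<Rightarrow> bool" where
  "invP C2 S2 \<longleftrightarrow> (\<forall>a b. (a, b) \<in> S2 \<longrightarrow> minus_edge F ds (a, b) \<longrightarrow> well_connected F C2 S2 (Sup a)
      \<longrightarrow> well_connected F C2 S2 (Dem b))"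

lemma closure_all:
  assumes y2: "y2 \<in> TP N1 N2 u v" and sy2: "supp y2 \<subseteq> C2" and SCF: "S2 \<subseteq> C2 \<inter> F"
    and np: "noplusP C2 S2" and iv: "invP C2 S2"
    and b: "b < N2" and wb: "well_connected F C2 S2 (Dem b)"
    and nopar: "\<And>a. (a, b) \<in> C2 \<Longrightarrow> \<not> minus_edge F ds (a, b)"
  shows "\<forall>x\<in>nodes N1 N2. x \<in> Cl F ds C2 S2 (Dem b)"
proof -
  obtain yF where yF: "yF \<in> TP N1 N2 u v" "supp yF = F" using yF_ex by blast
  define I where "I = {a. a < N1 \<and> Sup a \<in> Cl F ds C2 S2 (Dem b)}"
  define J where "J = {b'. b' < N2 \<and> Dem b' \<in> Cl F ds C2 S2 (Dem b)}"
  have SF: "S2 \<subseteq> F" using SCF by blast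
  have wcl: "well_connected F C2 S2 x" if "x \<in> Cl F ds C2 S2 (Dem b)" for x
    using Cl_wc that wb by blast
  have "I = {..<N1} \<and> J = {..<N2}"
  proof (rule closed_all[OF yF(1) y2])
    show "I \<subseteq> {..<N1}" "J \<subseteq> {..<N2}" unfolding I_def J_def by auto
    show "I \<noteq> {} \<or> J \<noteq> {}" using b Cl_root unfolding J_def by blast
  next
    fix a b' assume a: "a \<in> I" "b' < N2" "yF a b' \<noteq> 0"
    then have aF: "(a, b') \<in> F" using yF(2) supp_def by auto
    have ca: "Sup a \<in> Cl F ds C2 S2 (Dem b)" using a I_def by auto
    have wa: "well_connected F C2 S2 (Sup a)" using wcl[OF ca] .
    then have aS: "(a, b') \<in> S2" using aF wc_Sup by blast
    show "b' \<in> J"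
    proof (cases "plus_edge F ds (a, b')")
      case True
      then have "Dem b' \<in> Cl F ds C2 S2 (Dem b)"
        using Cl_parent[OF SF ca] aF plus_lvl by auto
      then show ?thesis using a J_def by auto
    next
      case False
      then have m: "minus_edge F ds (a, b')" using plus_or_minus aF by blast
      then have "well_connected F C2 S2 (Dem b')" using iv aS wa invP_def by blast
      then have "Dem b' \<in> Cl F ds C2 S2 (Dem b)"
        using Cl_step[OF ca, of "Dem b'"] aS m minus_lvl by auto
      then show ?thesis using a J_def by auto
    qed
  next
    fix b' a assume a: "b' \<in> J" "a < N1" "y2 a b' \<noteq> 0"
    then have aC: "(a, b') \<in> C2" using sy2 supp_def by auto
    have cb: "Dem b' \<in> Cl F ds C2 S2 (Dem b)" using a J_def by auto
    have aS: "(a, b') \<in> S2" using wcl[OF cb] aC wc_Dem by blast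
    then have aF: "(a, b') \<in> F" using SF by blast
    show "a \<in> I"
    proof (cases "plus_edge F ds (a, b')")
      case True
      then have "well_connected F C2 S2 (Sup a)" using np aS noplusP_def by blast
      then have "Sup a \<in> Cl F ds C2 S2 (Dem b)"
        using Cl_step[OF cb, of "Sup a"] aS True plus_lvl by auto
      then show ?thesis using a I_def by auto
    next
      case False
      then have m: "minus_edge F ds (a, b')" using plus_or_minus aF by blast
      have "b' \<noteq> b" using nopar m aC by blast
      then have "Sup a \<in> Cl F ds C2 S2 (Dem b)"
        using Cl_parent[OF SF cb] aF m minus_lvl by auto
      then show ?thesis using a I_def by auto
    qed
  qed
  then show ?thesis unfolding I_def J_def nodes_def by auto
qed

lemma W_child:
  assumes SF: "S2 \<subseteq> F" and np: "noplusP C2 S2" and iv: "invP C2 S2"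
    and a: "adj (wc_edges F C2 S2) x z" and l: "LF z = LF x + 1"
  shows "well_connected F C2 S2 z"
proof -
  obtain a b where ab: "(a, b) \<in> wc_edges F C2 S2" "(x = Sup a \<and> z = Dem b) \<or> (x = Dem b \<and> z = Sup a)"
    using a unfolding adj_def by blast
  have S: "(a, b) \<in> S2" and w: "well_connected F C2 S2 (Sup a) \<or> well_connected F C2 S2 (Dem b)"
    using ab(1) unfolding wc_edges_def by auto
  have F: "(a, b) \<in> F" using S SF by blast
  from ab(2) show ?thesis
  proof
    assume xz: "x = Sup a \<and> z = Dem b"
    then have "minus_edge F ds (a, b)" using minus_lvl l F by auto
    then show ?thesis using w iv S xz invP_def by blast
  next
    assume xz: "x = Dem b \<and> z = Sup a"
    then have "plus_edge F ds (a, b)" using plus_lvl l F by auto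
    then show ?thesis using np S xz noplusP_def by blast
  qed
qed

lemma wc_edges_F: "S2 \<subseteq> F \<Longrightarrow> adj (wc_edges F C2 S2) x z \<Longrightarrow> adj F x z"
  unfolding wc_edges_def adj_def by blast

lemma path_down:
  assumes SF: "S2 \<subseteq> F" and np: "noplusP C2 S2" and iv: "invP C2 S2"
  shows "rtrancl_path (adj (wc_edges F C2 S2)) x xs y \<Longrightarrow> distinct (x # xs) \<Longrightarrow> xs \<noteq> [] \<Longrightarrow>
    LF (hd xs) = LF x + 1 \<Longrightarrow> well_connected F C2 S2 y"
proof (induction x xs y rule: rtrancl_path.induct)
  case (base x) then show ?case by simp
next
  case (step x w ws y)
  show ?case
  proof (cases ws)
    case Nil
    then have "w = y" using step(2) by (auto elim: rtrancl_path.cases)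
    then show ?thesis using W_child[OF SF np iv step(1)] step by simp
  next
    case (Cons w' ws')
    have aw: "adj (wc_edges F C2 S2) w w'" using step(2) Cons by (auto elim: rtrancl_path.cases)
    have "LF w' = LF w + 1"
    proof (rule ccontr)
      assume "LF w' \<noteq> LF w + 1"
      then have "LF w = LF w' + 1" using F_adj_lvl[OF wc_edges_F[OF SF aw]] by auto
      moreover have "LF w = LF x + 1" using step by simp
      ultimately have "w' = x"
        using F_unique_parent[of w' w x] wc_edges_F[OF SF aw] wc_edges_F[OF SF step(1)] adj_sym by auto
      then show False using step(4) Cons by auto
    qed
    then show ?thesis using step Cons by auto
  qed
qed

lemma UNO_lemma:
  assumes y2: "y2 \<in> TP N1 N2 u v" and sy2: "supp y2 \<subseteq> C2" and SCF: "S2 \<subseteq> C2 \<inter> F"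
    and C2: "inr N1 N2 C2"
    and np: "noplusP C2 S2" and iv: "invP C2 S2" and nds: "\<not> well_connected F C2 S2 (Dem ds)"
  shows "UNO N1 N2 F C2 S2"
  unfolding UNO_def
proof
  fix x assume xn: "x \<in> nodes N1 N2"
  obtain yF where yF: "yF \<in> TP N1 N2 u v" "supp yF = F" using yF_ex by blast
  have SF: "S2 \<subseteq> F" using SCF by blast
  let ?W = "wc_edges F C2 S2"
  have Wr: "inr N1 N2 ?W" using C2 SCF unfolding inr_def wc_edges_def by auto
  have ex: "\<exists>y. reach ?W x y \<and> open_node N1 N2 F C2 S2 y"
  proof (rule ccontr)
    assume no: "\<not> ?thesis"
    have allwc: "well_connected F C2 S2 z" if "reach ?W x z" for z
      using no that reach_nodes[OF that Wr xn] unfolding open_node_def by blast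
    define I where "I = {a. a < N1 \<and> reach ?W x (Sup a)}"
    define J where "J = {b. b < N2 \<and> reach ?W x (Dem b)}"
    have "I = {..<N1} \<and> J = {..<N2}"
    proof (rule closed_all[OF yF(1) y2])
      show "I \<subseteq> {..<N1}" "J \<subseteq> {..<N2}" unfolding I_def J_def by auto
      show "I \<noteq> {} \<or> J \<noteq> {}" using xn unfolding I_def J_def nodes_def by auto
    next
      fix a b assume a: "a \<in> I" "b < N2" "yF a b \<noteq> 0"
      then have aF: "(a, b) \<in> F" using yF(2) supp_def by auto
      have r: "reach ?W x (Sup a)" using a I_def by auto
      have "(a, b) \<in> S2" using allwc[OF r] aF wc_Sup by blast
      then have "(a, b) \<in> ?W" using allwc[OF r] unfolding wc_edges_def by auto
      then show "b \<in> J" using r a unfolding J_def by (auto intro: reach_step)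
    next
      fix b a assume a: "b \<in> J" "a < N1" "y2 a b \<noteq> 0"
      then have aC: "(a, b) \<in> C2" using sy2 supp_def by auto
      have r: "reach ?W x (Dem b)" using a J_def by auto
      have "(a, b) \<in> S2" using allwc[OF r] aC wc_Dem by blast
      then have "(a, b) \<in> ?W" using allwc[OF r] unfolding wc_edges_def by auto
      then show "a \<in> I" using r a unfolding I_def by (auto intro: reach_step)
    qed
    then have "reach ?W x (Dem ds)" using ds unfolding J_def by auto
    then show False using allwc nds by blast
  qed
  have un: "y1 = y2'" if r1: "reach ?W x y1" and o1: "open_node N1 N2 F C2 S2 y1"
    and r2: "reach ?W x y2'" and o2: "open_node N1 N2 F C2 S2 y2'" for y1 y2'
  proof (rule ccontr)
    assume ne: "y1 \<noteq> y2'"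
    have "reach ?W y1 y2'" using r1 r2 reach_sym reach_trans by blast
    then obtain xs where "rtrancl_path (adj ?W) y1 xs y2'" using rtranclp_eq_rtrancl_path by metis
    then obtain xs' where p: "rtrancl_path (adj ?W) y1 xs' y2'" "distinct (y1 # xs')"
      using rtrancl_path_distinct by metis
    have ne': "xs' \<noteq> []" using p(1) ne by (auto elim: rtrancl_path.cases)
    then obtain w ws where xs': "xs' = w # ws" by (cases xs') auto
    have aw: "adj ?W y1 w" using p(1) xs' by (auto elim: rtrancl_path.cases)
    have "LF w = LF y1 + 1"
    proof (rule ccontr)
      assume "LF w \<noteq> LF y1 + 1"
      then have "LF y1 = LF w + 1" using F_adj_lvl[OF wc_edges_F[OF SF aw]] by auto
      then have "well_connected F C2 S2 y1" using W_child[OF SF np iv adj_sym[OF aw]] by simp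
      then show False using o1 open_node_def by blast
    qed
    then have "well_connected F C2 S2 y2'"
      using path_down[OF SF np iv p(1) p(2) ne'] xs' by simp
    then show False using o2 open_node_def by blast
  qed
  show "\<exists>!y. reach ?W x y \<and> open_node N1 N2 F C2 S2 y" using ex un by blast
qed

end


locale step = fsetting N1 N2 u v F ds for N1 N2 u v F ds +
  fixes C S C' S' :: "(nat \<times> nat) set" and i j :: nat
  assumes vtC: "vertex_tree N1 N2 u v C" and SCF: "S \<subseteq> C \<inter> F"
    and noplus: "\<forall>e\<in>S. plus_edge F ds e \<longrightarrow> \<not> open_node N1 N2 F C S (Sup (fst e))"
    and i: "i < N1" and SIN: "SIN F ds C S i"
    and choice: "if (\<exists>j'. (i, j') \<in> F - S \<and> minus_edge F ds (i, j'))
                 then minus_edge F ds (i, j) \<and> (i, j) \<notin> S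
                 else plus_edge F ds (i, j)"
    and shd: "shade N1 N2 u v F C S (i, j) C' S'"
begin

abbreviation wc where "wc \<equiv> well_connected F C S"
abbreviation wc' where "wc' \<equiv> well_connected F C' S'"

lemma Ctree: "tree N1 N2 C" using vertex_tree_tree[OF vtC] .

lemma eF: "(i, j) \<in> F" and eS: "(i, j) \<notin> S"
  using shd unfolding shade_def by auto

lemma choice': "minus_edge F ds (i, j) \<or> (plus_edge F ds (i, j) \<and> (\<forall>b. minus_edge F ds (i, b) \<longrightarrow> (i, b) \<in> S))"
  using choice minus_edge_def by (auto split: if_splits)

lemma jN: "j < N2" using tree_edge_range[OF Ftree eF] by simp
lemma iN: "Sup i \<in> nodes N1 N2" using i by simp

lemma noplus': "(a, b) \<in> S \<Longrightarrow> plus_edge F ds (a, b) \<Longrightarrow> wc (Sup a)"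
  using noplus tree_edge_range[OF Ftree, of a b] unfolding open_node_def plus_edge_def by fastforce

lemma wc_i: "\<not> wc (Sup i)"
  using eF eS wc_Sup by blast

lemma iplus_notS: "plus_edge F ds (i, b) \<Longrightarrow> (i, b) \<notin> S"
  using noplus' wc_i by blast

lemma SIN': "odd_edge C i g \<Longrightarrow> g \<in> S \<Longrightarrow> minus_edge F ds g \<and> wc (Dem (snd g))"
  using SIN unfolding SIN_def by blast

lemma odd_iff: "odd_edge C i g \<longleftrightarrow> g \<in> C \<and> reach (C - {g}) (Sup i) (Sup (fst g))"
  using odd_edge_iff[OF Ctree i] .

lemma SIN_i: "(i, b) \<in> S \<Longrightarrow> minus_edge F ds (i, b) \<and> wc (Dem b)"
  using SIN'[of "(i, b)"] odd_iff SCF by auto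

abbreviation LC where "LC \<equiv> gdist C (Sup i)"

lemma C_lvl: assumes "(a, b) \<in> C" shows "LC (Dem b) = LC (Sup a) + 1 \<or> LC (Sup a) = LC (Dem b) + 1"
proof -
  have "a < N1" using tree_edge_range[OF Ctree assms] by simp
  then have r: "reach C (Sup i) (Sup a)" using tree_reach[OF Ctree iN] by simp
  show ?thesis using gdist_adj[OF r, of "Dem b"] assms by simp
qed

lemma odd_lvl: "(a, b) \<in> C \<Longrightarrow> odd_edge C i (a, b) \<longleftrightarrow> LC (Dem b) = LC (Sup a) + 1"
  using odd_iff tree_side_level(1)[OF Ctree _ iN] by auto

lemma INV: "(a, b) \<in> S \<Longrightarrow> minus_edge F ds (a, b) \<Longrightarrow> wc (Sup a) \<Longrightarrow> wc (Dem b)"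
proof (rule ccontr)
  assume S: "(a, b) \<in> S" and m: "minus_edge F ds (a, b)" and wa: "wc (Sup a)" and nb: "\<not> wc (Dem b)"
  have C: "(a, b) \<in> C" using S SCF by blast
  have "\<not> odd_edge C i (a, b)" using SIN' S nb by auto
  then have l1: "LC (Sup a) = LC (Dem b) + 1" using odd_lvl[OF C] C_lvl[OF C] by auto
  obtain p where p: "plus_edge F ds (a, p)" using plus_exists tree_edge_range[OF Ftree] m minus_edge_def by blast
  have pF: "(a, p) \<in> F" using p plus_edge_def by blast
  then have pS: "(a, p) \<in> S" using wa unfolding wc_Sup by blast
  then have pC: "(a, p) \<in> C" using SCF by blast
  have "p \<noteq> b" using p m plus_not_minus by blast
  have "LC (Dem p) = LC (Sup a) + 1"
  proof (rule ccontr)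
    assume "LC (Dem p) \<noteq> LC (Sup a) + 1"
    then have "LC (Sup a) = LC (Dem p) + 1" using C_lvl[OF pC] by auto
    moreover have "adj C (Dem p) (Sup a)" using pC by simp
    moreover have "adj C (Dem b) (Sup a)" using C by simp
    ultimately have "Dem p = Dem b"
      using tree_unique_parent[OF Ctree iN, of "Dem p" "Sup a" "Dem b"] l1 by metis
    then show False using \<open>p \<noteq> b\<close> by simp
  qed
  then have "odd_edge C i (a, p)" using odd_lvl[OF pC] by simp
  then have "minus_edge F ds (a, p)" using SIN' pS by auto
  then show False using p plus_not_minus by blast
qed

lemma wc_i_new:
  assumes S2: "S2 = insert (i, j) S" and SC2: "S \<subseteq> C2" "(i, j) \<in> C2"
  shows "well_connected F C2 S2 (Sup i) \<longleftrightarrow> plus_edge F ds (i, j)"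
proof
  assume w: "well_connected F C2 S2 (Sup i)"
  show "plus_edge F ds (i, j)"
  proof (rule ccontr)
    assume np: "\<not> plus_edge F ds (i, j)"
    obtain p where p: "plus_edge F ds (i, p)" using plus_exists i by blast
    have "(i, p) \<in> F" using p plus_edge_def by blast
    then have "(i, p) \<in> S2" using w unfolding wc_Sup by blast
    moreover have "(i, p) \<noteq> (i, j)" using p np by auto
    ultimately show False using iplus_notS[OF p] S2 by auto
  qed
next
  assume pl: "plus_edge F ds (i, j)"
  then have ms: "\<forall>b. minus_edge F ds (i, b) \<longrightarrow> (i, b) \<in> S" using choice' plus_not_minus by blast
  show "well_connected F C2 S2 (Sup i)"
    unfolding wc_Sup
  proof (intro allI impI)
    fix b assume bF: "(i, b) \<in> F"
    show "(i, b) \<in> C2 \<and> (i, b) \<in> S2"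
    proof (cases "plus_edge F ds (i, b)")
      case True then have "b = j" using plus_unique pl by blast
      then show ?thesis using S2 SC2 by simp
    next
      case False then have "(i, b) \<in> S" using ms plus_or_minus bF by blast
      then show ?thesis using S2 SC2 by auto
    qed
  qed
qed

lemma post_generic:
  assumes S2: "S2 = insert (i, j) S" and SC2: "S \<subseteq> C2" "(i, j) \<in> C2"
    and wcS: "\<And>x. x \<noteq> i \<Longrightarrow> well_connected F C2 S2 (Sup x) \<longleftrightarrow> wc (Sup x)"
    and wcD: "\<And>z. wc (Dem z) \<Longrightarrow> well_connected F C2 S2 (Dem z)"
  shows "noplusP C2 S2" and "invP C2 S2"
proof -
  have wi: "well_connected F C2 S2 (Sup i) \<longleftrightarrow> plus_edge F ds (i, j)" using wc_i_new[OF S2 SC2] .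
  show "noplusP C2 S2" unfolding noplusP_def
  proof (intro allI impI)
    fix a b assume ab: "(a, b) \<in> S2" and p: "plus_edge F ds (a, b)"
    show "well_connected F C2 S2 (Sup a)"
    proof (cases "(a, b) = (i, j)")
      case True then show ?thesis using wi p by auto
    next
      case False
      then have abS: "(a, b) \<in> S" using ab S2 by auto
      then have "a \<noteq> i" using iplus_notS p by auto
      then show ?thesis using wcS noplus' abS p by blast
    qed
  qed
  show "invP C2 S2" unfolding invP_def
  proof (intro allI impI)
    fix a b assume ab: "(a, b) \<in> S2" and m: "minus_edge F ds (a, b)" and wa: "well_connected F C2 S2 (Sup a)"
    show "well_connected F C2 S2 (Dem b)"
    proof (cases "(a, b) = (i, j)")
      case True then show ?thesis using wi m wa plus_not_minus by auto
    next
      case False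
      then have abS: "(a, b) \<in> S" using ab S2 by auto
      show ?thesis
      proof (cases "a = i")
        case True then show ?thesis using SIN_i abS wcD by blast
      next
        case False then show ?thesis using wcS[OF False] wa INV abS m wcD by blast
      qed
    qed
  qed
qed

lemma post_full:
  assumes y2: "y2 \<in> TP N1 N2 u v" "supp y2 = C2" and C2: "tree N1 N2 C2" and SCF2: "S2 \<subseteq> C2 \<inter> F"
    and np: "noplusP C2 S2" and iv: "invP C2 S2" and w: "well_connected F C2 S2 (Dem ds)"
  shows "S2 = C2 \<and> C2 = F"
proof -
  have all: "\<forall>x\<in>nodes N1 N2. x \<in> Cl F ds C2 S2 (Dem ds)"
    using closure_all[OF y2(1) _ SCF2 np iv ds w] y2(2) minus_not_ds by blast
  have "well_connected F C2 S2 x" if "x \<in> nodes N1 N2" for x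
    using Cl_wc all that w by blast
  then have wd: "\<And>b. b < N2 \<Longrightarrow> well_connected F C2 S2 (Dem b)" by simp
  have "C2 \<subseteq> S2"
  proof
    fix g assume g: "g \<in> C2"
    obtain a b where ab: "g = (a, b)" by (cases g)
    have "b < N2" using tree_edge_range[OF C2] g ab by blast
    then show "g \<in> S2" using wd[of b] g ab unfolding wc_Dem by blast
  qed
  then have "S2 = C2" using SCF2 by blast
  then have CF: "C2 \<subseteq> F" using SCF2 by blast
  have "card C2 = card F" using C2 Ftree unfolding tree_def by simp
  then have "C2 = F" using card_subset_eq[OF tree_finite[OF Ftree] CF] by simp
  then show ?thesis using \<open>S2 = C2\<close> by simp
qed

end


context step begin

definition concl :: bool where
  "concl \<longleftrightarrow> (well_connected F C' S' (Dem ds) \<longrightarrow> S' = C' \<and> C' = F) \<and>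
     (\<not> well_connected F C' S' (Dem ds) \<longrightarrow>
        S' \<noteq> C' \<and> UNO N1 N2 F C' S' \<and>
        (\<exists>a. open_node N1 N2 F C' S' (Sup a) \<and> SIN F ds C' S' a) \<and>
        (\<forall>d'. (if (i, j) \<in> C then d' = j else (\<exists>a. (a, d') \<in> C - C')) \<longrightarrow>
           (\<forall>a. (a, d') \<in> C' - S' \<longrightarrow> open_node N1 N2 F C' S' (Sup a) \<and> SIN F ds C' S' a) \<and>
           ((\<forall>a. (a, d') \<notin> C' - S') \<longrightarrow>
              (\<forall>a. minus_edge F ds (a, d') \<longrightarrow> open_node N1 N2 F C' S' (Sup a) \<and> SIN F ds C' S' a))))"

lemma finish:
  assumes C2: "tree N1 N2 C'" and y2: "y2 \<in> TP N1 N2 u v" "supp y2 = C'" and SCF2: "S' \<subseteq> C' \<inter> F"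
    and np: "noplusP C' S'" and iv: "invP C' S'" and d0: "d0 < N2"
    and dset: "\<And>d'. (if (i, j) \<in> C then d' = j else (\<exists>a. (a, d') \<in> C - C')) \<Longrightarrow> d' = d0"
    and unsh: "\<And>a. (a, d0) \<in> C' - S' \<Longrightarrow> open_node N1 N2 F C' S' (Sup a) \<and> SIN F ds C' S' a"
    and mns: "\<And>a. (\<forall>a'. (a', d0) \<notin> C' - S') \<Longrightarrow> minus_edge F ds (a, d0) \<Longrightarrow> open_node N1 N2 F C' S' (Sup a) \<and> SIN F ds C' S' a"
  shows concl
  unfolding concl_def
proof (rule conjI; intro impI)
  assume "wc' (Dem ds)"
  then show "S' = C' \<and> C' = F" using post_full[OF y2 C2 SCF2 np iv] by blast
next
  assume nw: "\<not> wc' (Dem ds)"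
  have A: "S' \<noteq> C'"
  proof
    assume "S' = C'"
    then have "wc' (Dem ds)" unfolding wc_Dem by blast
    then show False using nw by blast
  qed
  have B: "UNO N1 N2 F C' S'" using UNO_lemma[OF y2(1) _ SCF2 tree_inr[OF C2] np iv nw] y2(2) by blast
  have D: "\<exists>a. open_node N1 N2 F C' S' (Sup a) \<and> SIN F ds C' S' a"
  proof (cases "\<exists>a. (a, d0) \<in> C' - S'")
    case True then show ?thesis using unsh by blast
  next
    case False
    have "d0 \<noteq> ds"
    proof
      assume "d0 = ds"
      then have "wc' (Dem ds)" using False unfolding wc_Dem by blast
      then show False using nw by blast
    qed
    then obtain a where "minus_edge F ds (a, d0)" using minus_exists d0 by blast
    then show ?thesis using mns False by blast
  qed
  have E: "\<forall>d'. (if (i, j) \<in> C then d' = j else (\<exists>a. (a, d') \<in> C - C')) \<longrightarrow>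
           (\<forall>a. (a, d') \<in> C' - S' \<longrightarrow> open_node N1 N2 F C' S' (Sup a) \<and> SIN F ds C' S' a) \<and>
           ((\<forall>a. (a, d') \<notin> C' - S') \<longrightarrow>
              (\<forall>a. minus_edge F ds (a, d') \<longrightarrow> open_node N1 N2 F C' S' (Sup a) \<and> SIN F ds C' S' a))"
    using dset unsh mns by blast
  show "S' \<noteq> C' \<and> UNO N1 N2 F C' S' \<and>
        (\<exists>a. open_node N1 N2 F C' S' (Sup a) \<and> SIN F ds C' S' a) \<and>
        (\<forall>d'. (if (i, j) \<in> C then d' = j else (\<exists>a. (a, d') \<in> C - C')) \<longrightarrow>
           (\<forall>a. (a, d') \<in> C' - S' \<longrightarrow> open_node N1 N2 F C' S' (Sup a) \<and> SIN F ds C' S' a) \<and>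
           ((\<forall>a. (a, d') \<notin> C' - S') \<longrightarrow>
              (\<forall>a. minus_edge F ds (a, d') \<longrightarrow> open_node N1 N2 F C' S' (Sup a) \<and> SIN F ds C' S' a)))"
    using A B D E by blast
qed

lemma minus_in_C2:
  assumes y2: "y2 \<in> TP N1 N2 u v" "supp y2 = C2" and SCF2: "S2 \<subseteq> C2 \<inter> F"
    and np: "noplusP C2 S2" and iv: "invP C2 S2" and b: "b < N2"
    and wb: "well_connected F C2 S2 (Dem b)" and m: "minus_edge F ds (a, b)"
  shows "(a, b) \<in> C2"
proof (rule ccontr)
  assume nC: "(a, b) \<notin> C2"
  have nopar: "\<not> minus_edge F ds (a', b)" if "(a', b) \<in> C2" for a'
    using minus_unique[OF m] nC that by blast
  have "Dem ds \<in> Cl F ds C2 S2 (Dem b)"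
    using closure_all[OF y2(1) _ SCF2 np iv b wb nopar] y2(2) ds by simp
  then have "LF (Dem b) < LF (Dem ds)" using Cl_level minus_not_ds[OF m] by blast
  then show False by simp
qed

lemma caseA:
  assumes eC: "(i, j) \<in> C"
  shows concl
proof -
  have C'C: "C' = C" and S'S: "S' = insert (i, j) S" using shd eC unfolding shade_def by auto
  obtain y where vy: "is_vertex N1 N2 u v y" "supp y = C" using vtC vertex_tree_def by blast
  have y: "y \<in> TP N1 N2 u v" using vy is_vertex_def by blast
  have SCF2: "S' \<subseteq> C' \<inter> F" using SCF eC eF C'C S'S by blast
  have wcS: "wc' (Sup x) \<longleftrightarrow> wc (Sup x)" if "x \<noteq> i" for x
    using that unfolding C'C S'S wc_Sup by auto
  have wcD: "wc (Dem z) \<Longrightarrow> wc' (Dem z)" for z unfolding C'C S'S wc_Dem by auto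
  have SC: "S \<subseteq> C'" using SCF C'C by blast
  have e2: "(i, j) \<in> C'" using eC C'C by simp
  note pg = post_generic[OF S'S SC e2 wcS wcD]
  have wi: "wc' (Sup i) \<longleftrightarrow> plus_edge F ds (i, j)" using wc_i_new[OF S'S SC e2] .
  have jopen: "\<not> wc (Dem j)" using eC eS unfolding wc_Dem by blast
  have reroot: "odd_edge C r h \<longleftrightarrow> odd_edge C i h"
    if r: "(r, j) \<in> C" and h: "h \<noteq> (r, j)" "h \<noteq> (i, j)" for r h
  proof -
    have rN: "r < N1" using tree_edge_range[OF Ctree r] by simp
    have "reach (C - {h}) (Sup r) (Sup i)"
    proof -
      have "adj (C - {h}) (Sup r) (Dem j)" using r h by simp
      moreover have "adj (C - {h}) (Dem j) (Sup i)" using eC h by simp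
      ultimately show ?thesis by (meson reach_step rtranclp.rtrancl_refl)
    qed
    then show ?thesis using odd_edge_iff[OF Ctree rN] odd_iff reach_sym reach_trans by meson
  qed
  have not_e: "\<not> odd_edge C r (i, j)" if r: "(r, j) \<in> C" "r \<noteq> i" for r
  proof
    assume o: "odd_edge C r (i, j)"
    have rN: "r < N1" using tree_edge_range[OF Ctree r(1)] by simp
    have r1: "reach (C - {(i, j)}) (Sup r) (Sup i)" using o odd_edge_iff[OF Ctree rN] by simp
    have r2: "reach (C - {(i, j)}) (Sup r) (Dem j)" using r by (simp add: r_into_rtranclp)
    show False using tree_side_unique[OF Ctree eC, of "Sup r"] r1 r2 by blast
  qed
  have SINr: "SIN F ds C' S' r"
    if r: "(r, j) \<in> C" "r \<noteq> i" and rj: "(r, j) \<in> S' \<Longrightarrow> minus_edge F ds (r, j) \<and> wc' (Dem j)" for r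
    unfolding SIN_def C'C[symmetric]
  proof (intro allI impI)
    fix g assume o: "odd_edge C' r g"
    show "g \<notin> S' \<or> minus_edge F ds g \<and> wc' (Dem (snd g))"
    proof (cases "g = (r, j)")
      case True then show ?thesis using rj by auto
    next
      case False
      have "g \<noteq> (i, j)" using not_e[OF r] o C'C by auto
      then have oi: "odd_edge C i g" using reroot[OF r(1) False] o C'C by simp
      show ?thesis
      proof (cases "g \<in> S'")
        case True
        then have "g \<in> S" using S'S \<open>g \<noteq> (i, j)\<close> by auto
        then show ?thesis using SIN'[OF oi] wcD by (cases g) auto
      qed simp
    qed
  qed
  have SINi: "SIN F ds C' S' i" if m: "minus_edge F ds (i, j)" and wj: "wc' (Dem j)"
    unfolding SIN_def
  proof (intro allI impI)
    fix g assume o': "odd_edge C' i g"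
    then have o: "odd_edge C i g" using C'C by simp
    show "g \<notin> S' \<or> minus_edge F ds g \<and> wc' (Dem (snd g))"
    proof (cases "g = (i, j)")
      case True then show ?thesis using m wj by auto
    next
      case False
      show ?thesis
      proof (cases "g \<in> S'")
        case True
        then have "g \<in> S" using S'S False by auto
        then show ?thesis using SIN'[OF o] wcD by (cases g) auto
      qed simp
    qed
  qed
  show concl
  proof (rule finish[of y j])
    show "tree N1 N2 C'" using Ctree C'C by simp
    show "y \<in> TP N1 N2 u v" "supp y = C'" using y vy C'C by auto
    show "S' \<subseteq> C' \<inter> F" using SCF2 .
    show "noplusP C' S'" "invP C' S'" using pg by auto
    show "j < N2" using jN .
    show "\<And>d'. (if (i, j) \<in> C then d' = j else (\<exists>a. (a, d') \<in> C - C')) \<Longrightarrow> d' = j" using eC by simp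
  next
    fix a assume a: "(a, j) \<in> C' - S'"
    have ai: "a \<noteq> i" using a S'S by auto
    have aC: "(a, j) \<in> C" using a C'C by simp
    have aN: "a < N1" using tree_edge_range[OF Ctree aC] by simp
    have op: "\<not> wc' (Sup a)"
    proof
      assume w: "wc' (Sup a)"
      then have wa: "wc (Sup a)" using wcS ai by blast
      obtain p where p: "plus_edge F ds (a, p)" using plus_exists aN by blast
      have pF: "(a, p) \<in> F" using p plus_edge_def by blast
      then have pS: "(a, p) \<in> S" using wa unfolding wc_Sup by blast
      then have pC: "(a, p) \<in> C" using SCF by blast
      have "p \<noteq> j"
      proof
        assume "p = j"
        then have "(a, j) \<in> S" using pS by simp
        then show False using a S'S by auto
      qed
      have "odd_edge C a (a, p)" using odd_edge_iff[OF Ctree aN] pC by simp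
      then have "odd_edge C i (a, p)" using reroot[OF aC] \<open>p \<noteq> j\<close> ai by auto
      then have "minus_edge F ds (a, p)" using SIN' pS by auto
      then show False using p plus_not_minus by blast
    qed
    show "open_node N1 N2 F C' S' (Sup a) \<and> SIN F ds C' S' a"
      using op aN SINr[OF aC ai] a unfolding open_node_def C'C by auto
  next
    fix a assume nu: "\<forall>a. (a, j) \<notin> C' - S'" and m: "minus_edge F ds (a, j)"
    have wj: "wc' (Dem j)" using nu unfolding wc_Dem by blast
    have aC: "(a, j) \<in> C" using minus_in_C2[OF y vy(2)[folded C'C] SCF2 _ _ jN wj m] pg C'C by simp
    have aN: "a < N1" using tree_edge_range[OF Ctree aC] by simp
    show "open_node N1 N2 F C' S' (Sup a) \<and> SIN F ds C' S' a"
    proof (cases "a = i")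
      case True
      then have "\<not> wc' (Sup i)" using wi m plus_not_minus by blast
      then show ?thesis using True i SINi m wj C'C unfolding open_node_def by auto
    next
      case False
      have aS: "(a, j) \<in> S" using wj aC False unfolding C'C S'S wc_Dem by auto
      have op: "\<not> wc' (Sup a)" using wcS[OF False] INV[OF aS m] jopen by blast
      have "SIN F ds C' S' a" using SINr[OF aC False] m wj by blast
      then show ?thesis using op aN C'C unfolding open_node_def by auto
    qed
  qed
qed

end


context step begin

lemma pivot_ex:
  assumes eC: "(i, j) \<notin> C"
  shows "\<exists>y d t a' d'. is_vertex N1 N2 u v y \<and> supp y = C \<and> supp d \<subseteq> insert (i, j) C \<and>
     d i j = 1 \<and> (\<forall>a b. d a b \<in> {-1, 0, 1}) \<and>
     (\<forall>a<N1. (\<Sum>b<N2. d a b) = 0) \<and> (\<forall>b<N2. (\<Sum>a<N1. d a b) = 0) \<and>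
     t > 0 \<and> (\<forall>a b. 0 \<le> y a b + t * d a b) \<and> C' = supp (\<lambda>a b. y a b + t * d a b) \<and>
     C - C' = {(a', d')} \<and> S' = insert (i, j) S - (C - C')"
proof -
  from shd eC have piv: "pivot N1 N2 u v C (i, j) C'" and S'd: "S' = insert (i, j) S - (C - C')"
    unfolding shade_def by auto
  from piv obtain y d t where vy: "is_vertex N1 N2 u v y" and sy: "supp y = C"
    and sd: "supp d \<subseteq> insert (i, j) C" and d1: "d i j = 1" and dv: "\<forall>a b. d a b \<in> {-1, 0, 1}"
    and rw: "\<forall>a<N1. (\<Sum>b<N2. d a b) = 0" and cl: "\<forall>b<N2. (\<Sum>a<N1. d a b) = 0"
    and t0: "0 \<le> t" and nn: "\<forall>a b. 0 \<le> y a b + t * d a b"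
    and mx: "\<forall>s>t. \<not> (\<forall>a b. 0 \<le> y a b + s * d a b)"
    and C'd: "C' = supp (\<lambda>a b. y a b + t * d a b)"
    unfolding pivot_def by auto
  have y: "y \<in> TP N1 N2 u v" using vy is_vertex_def by blast
  have fC: "finite C" using tree_finite[OF Ctree] .
  have neC: "C \<noteq> {}" using Ctree N1 N2 unfolding tree_def by auto
  have ypos: "y a b > 0" if "(a, b) \<in> C" for a b
    using that sy TP_nonneg[OF y, of a b] unfolding supp_def by auto
  have y0: "y a b = 0" if "(a, b) \<notin> C" for a b using that sy unfolding supp_def by auto
  have dge: "d a b \<ge> -1" for a b using dv[rule_format, of a b] by auto
  have dle: "d a b \<le> 1" for a b using dv[rule_format, of a b] by auto
  have dout: "d a b \<ge> 0" if "(a, b) \<notin> C" for a b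
  proof (cases "(a, b) = (i, j)")
    case True then show ?thesis using d1 by simp
  next
    case False then have "d a b = 0" using sd that unfolding supp_def by auto
    then show ?thesis by simp
  qed
  have feas: "\<forall>a b. 0 \<le> y a b + s * d a b"
    if m: "m > 0" "s \<ge> 0" and le: "\<And>a b. (a, b) \<in> C \<Longrightarrow> 0 \<le> y a b + s * d a b" for m s
  proof (intro allI)
    fix a b show "0 \<le> y a b + s * d a b"
    proof (cases "(a, b) \<in> C")
      case True then show ?thesis using le by blast
    next
      case False then show ?thesis using y0 dout m by simp
    qed
  qed
  have tpos: "t > 0"
  proof (rule ccontr)
    assume "\<not> t > 0"
    then have t00: "t = 0" using t0 by simp
    define m where "m = Min ((\<lambda>g. y (fst g) (snd g)) ` C)"
    have mpos: "m > 0" unfolding m_def using fC neC ypos by (subst Min_gr_iff) auto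
    have mle: "m \<le> y a b" if "(a, b) \<in> C" for a b
      unfolding m_def using fC that by (intro Min_le) (auto simp: image_iff intro!: bexI[of _ "(a, b)"])
    have "\<forall>a b. 0 \<le> y a b + m * d a b"
    proof (rule feas[OF mpos less_imp_le[OF mpos]])
      fix a b assume ab: "(a, b) \<in> C"
      have "m * d a b \<ge> - m" using mult_left_mono[OF dge[of a b] less_imp_le[OF mpos]] by simp
      then show "0 \<le> y a b + m * d a b" using mle[OF ab] by linarith
    qed
    then show False using mx mpos t00 by auto
  qed
  define y' where "y' = (\<lambda>a b. y a b + t * d a b)"
  have Cne: "C - C' \<noteq> {}"
  proof
    assume sub: "C - C' = {}"
    then have pos: "y' a b > 0" if "(a, b) \<in> C" for a b
      using that nn C'd unfolding supp_def y'_def by (metis (mono_tags, lifting) DiffI case_prod_conv empty_iff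
          less_eq_real_def mem_Collect_eq)
    define m where "m = Min ((\<lambda>g. y' (fst g) (snd g)) ` C)"
    have mpos: "m > 0" unfolding m_def using fC neC pos by (subst Min_gr_iff) auto
    have mle: "m \<le> y' a b" if "(a, b) \<in> C" for a b
      unfolding m_def using fC that by (intro Min_le) (auto simp: image_iff intro!: bexI[of _ "(a, b)"])
    have "\<forall>a b. 0 \<le> y a b + (t + m) * d a b"
    proof (rule feas[OF mpos])
      show "t + m \<ge> 0" using tpos mpos by simp
      fix a b assume ab: "(a, b) \<in> C"
      have "m * d a b \<ge> - m" using mult_left_mono[OF dge[of a b] less_imp_le[OF mpos]] by simp
      then show "0 \<le> y a b + (t + m) * d a b" using mle[OF ab] unfolding y'_def by (simp add: algebra_simps)
    qed
    then show False using mx mpos by (meson less_add_same_cancel1)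
  qed
  have y'T: "y' \<in> TP N1 N2 u v"
  proof -
    have "(\<Sum>b<N2. y' a b) = u a" if "a < N1" for a
      using that rw TP_row[OF y that] by (simp add: y'_def sum.distrib sum_distrib_left[symmetric])
    moreover have "(\<Sum>a<N1. y' a b) = v b" if "b < N2" for b
      using that cl TP_col[OF y that] by (simp add: y'_def sum.distrib sum_distrib_left[symmetric])
    moreover have "y' a b = 0" if "\<not> (a < N1 \<and> b < N2)" for a b
    proof -
      have "(a, b) \<notin> insert (i, j) C" using that tree_edge_range[OF Ctree] i jN by auto
      then have "d a b = 0" using sd unfolding supp_def by auto
      then show ?thesis using TP_out[OF y that] unfolding y'_def by simp
    qed
    ultimately show ?thesis unfolding TP_def using nn y'_def by auto
  qed
  have C'y': "C' = supp y'" using C'd y'_def by simp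
  have C'sub: "C' \<subseteq> insert (i, j) (C - (C - C'))"
  proof
    fix g assume g: "g \<in> C'"
    obtain a b where gab: "g = (a, b)" by (cases g)
    then have "y' a b \<noteq> 0" using g C'y' unfolding supp_def by auto
    then have "y a b \<noteq> 0 \<or> d a b \<noteq> 0" unfolding y'_def by auto
    moreover have "y a b \<noteq> 0 \<Longrightarrow> (a, b) \<in> C" using sy unfolding supp_def by auto
    moreover have "d a b \<noteq> 0 \<Longrightarrow> (a, b) \<in> insert (i, j) C" using sd unfolding supp_def by auto
    ultimately show "g \<in> insert (i, j) (C - (C - C'))" using g gab by auto
  qed
  have fin2: "finite (C - (C - C'))" using fC by simp
  have "card C' \<le> card (insert (i, j) (C - (C - C')))"
    using card_mono[OF _ C'sub] fin2 by simp
  also have "\<dots> = Suc (card (C - (C - C')))" using eC fin2 by simp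
  also have "\<dots> = Suc (card C - card (C - C'))" using fC by (subst card_Diff_subset) auto
  finally have c1: "card C' \<le> Suc (card C - card (C - C'))" .
  have c2: "N1 + N2 - 1 \<le> card C'" using supp_card_ge[OF y'T] C'y' by simp
  have cC: "card C = N1 + N2 - 1" using Ctree tree_def by simp
  have "card (C - C') \<ge> 1" using Cne fC by (simp add: Suc_leI card_gt_0_iff)
  moreover have "card (C - C') \<le> card C" using fC by (simp add: card_mono)
  ultimately have "card (C - C') = 1" using c1 c2 cC by linarith
  then obtain f where f: "C - C' = {f}" using card_1_singletonE by blast
  obtain a' d' where "f = (a', d')" by (cases f)
  show ?thesis
    using vy sy sd d1 dv rw cl tpos nn C'd f S'd \<open>f = (a', d')\<close> by blast
qed

end

locale pstep = step N1 N2 u v F ds C S C' S' i j for N1 N2 u v F ds C S C' S' i j +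
  fixes y d :: "nat \<Rightarrow> nat \<Rightarrow> real" and t :: real and a' d' :: nat
  assumes eC: "(i, j) \<notin> C" and vy: "is_vertex N1 N2 u v y" and sy: "supp y = C"
    and sd: "supp d \<subseteq> insert (i, j) C" and d1: "d i j = 1" and dv: "\<forall>a b. d a b \<in> {-1, 0, 1}"
    and drw: "\<forall>a<N1. (\<Sum>b<N2. d a b) = 0" and dcl: "\<forall>b<N2. (\<Sum>a<N1. d a b) = 0"
    and tpos: "t > 0" and nn: "\<forall>a b. 0 \<le> y a b + t * d a b"
    and C'd: "C' = supp (\<lambda>a b. y a b + t * d a b)"
    and fdel: "C - C' = {(a', d')}" and S'd: "S' = insert (i, j) S - (C - C')"
begin

abbreviation f where "f \<equiv> (a', d')"
abbreviation e where "e \<equiv> (i, j)"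

lemma yT: "y \<in> TP N1 N2 u v" using vy is_vertex_def by blast

definition y' where "y' = (\<lambda>a b. y a b + t * d a b)"

lemma fC: "f \<in> C" and fC': "f \<notin> C'" using fdel by auto

lemma C'sub: "C' \<subseteq> insert e C"
proof
  fix g assume g: "g \<in> C'"
  obtain a b where gab: "g = (a, b)" by (cases g)
  then have "y a b + t * d a b \<noteq> 0" using g C'd unfolding supp_def by auto
  then have "y a b \<noteq> 0 \<or> d a b \<noteq> 0" by auto
  moreover have "y a b \<noteq> 0 \<Longrightarrow> (a, b) \<in> C" using sy unfolding supp_def by auto
  moreover have "d a b \<noteq> 0 \<Longrightarrow> (a, b) \<in> insert e C" using sd unfolding supp_def by auto
  ultimately show "g \<in> insert e C" using gab by auto
qed

lemma eC': "e \<in> C'"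
proof -
  have "y i j = 0" using eC sy unfolding supp_def by auto
  then show ?thesis using C'd d1 tpos unfolding supp_def by auto
qed

lemma C'eq: "C' = insert e (C - {f})"
  using C'sub eC' fdel by auto

lemma y'T: "y' \<in> TP N1 N2 u v"
proof -
  have "(\<Sum>b<N2. y' a b) = u a" if "a < N1" for a
    using that drw TP_row[OF yT that] by (simp add: y'_def sum.distrib sum_distrib_left[symmetric])
  moreover have "(\<Sum>a<N1. y' a b) = v b" if "b < N2" for b
    using that dcl TP_col[OF yT that] by (simp add: y'_def sum.distrib sum_distrib_left[symmetric])
  moreover have "y' a b = 0" if "\<not> (a < N1 \<and> b < N2)" for a b
  proof -
    have "(a, b) \<notin> insert (i, j) C" using that tree_edge_range[OF Ctree] i jN by auto
    then have "d a b = 0" using sd unfolding supp_def by auto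
    then show ?thesis using TP_out[OF yT that] unfolding y'_def by simp
  qed
  ultimately show ?thesis unfolding TP_def using nn y'_def by auto
qed

lemma sy': "supp y' = C'" using C'd y'_def by simp

lemma C'tree: "tree N1 N2 C'"
proof -
  have "card C > 0" using fC tree_finite[OF Ctree] card_gt_0_iff by blast
  then have "card C' = card C" unfolding C'eq using eC fC tree_finite[OF Ctree] by simp
  then have "card C' = N1 + N2 - 1" using Ctree unfolding tree_def by simp
  moreover have "inr N1 N2 C'" using supp_inr[OF y'T] sy' by simp
  moreover have "\<forall>x\<in>nodes N1 N2. \<forall>z\<in>nodes N1 N2. reach C' x z" using supp_connected[OF y'T] sy' by simp
  ultimately show ?thesis unfolding tree_def by blast
qed

lemma df: "d a' d' = -1"
proof -
  have "y a' d' > 0" using fC sy TP_nonneg[OF yT, of a' d'] unfolding supp_def by auto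
  moreover have "y a' d' + t * d a' d' = 0" using fC' C'd unfolding supp_def by auto
  ultimately have "t * d a' d' < 0" by linarith
  then have "d a' d' < 0" using tpos by (simp add: mult_less_0_iff)
  then show ?thesis using dv[rule_format, of a' d'] by auto
qed

lemma tmin: "d a b = -1 \<Longrightarrow> t \<le> y a b"
  using nn[rule_format, of a b] by simp

end


lemma flow_identity:
  fixes z :: "nat \<Rightarrow> nat \<Rightarrow> real"
  assumes I: "I \<subseteq> {..<N1}" and J: "J \<subseteq> {..<N2}"
  shows "(\<Sum>b\<in>J. \<Sum>a<N1. z a b) - (\<Sum>a\<in>I. \<Sum>b<N2. z a b) =
         (\<Sum>b\<in>J. \<Sum>a\<in>{..<N1} - I. z a b) - (\<Sum>a\<in>I. \<Sum>b\<in>{..<N2} - J. z a b)"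
proof -
  have fI: "finite I" and fJ: "finite J" using I J finite_subset by auto
  have 1: "(\<Sum>a<N1. z a b) = (\<Sum>a\<in>{..<N1} - I. z a b) + (\<Sum>a\<in>I. z a b)" for b
    using sum.subset_diff[OF I] by simp
  have 2: "(\<Sum>b<N2. z a b) = (\<Sum>b\<in>{..<N2} - J. z a b) + (\<Sum>b\<in>J. z a b)" for a
    using sum.subset_diff[OF J] by simp
  have "(\<Sum>b\<in>J. \<Sum>a<N1. z a b) = (\<Sum>b\<in>J. \<Sum>a\<in>{..<N1} - I. z a b) + (\<Sum>b\<in>J. \<Sum>a\<in>I. z a b)"
    by (simp add: 1 sum.distrib)
  moreover have "(\<Sum>a\<in>I. \<Sum>b<N2. z a b) = (\<Sum>a\<in>I. \<Sum>b\<in>{..<N2} - J. z a b) + (\<Sum>a\<in>I. \<Sum>b\<in>J. z a b)"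
    by (simp add: 2 sum.distrib)
  moreover have "(\<Sum>b\<in>J. \<Sum>a\<in>I. z a b) = (\<Sum>a\<in>I. \<Sum>b\<in>J. z a b)" by (rule sum.swap)
  ultimately show ?thesis by simp
qed

lemma sum_sparse:
  fixes z :: "nat \<Rightarrow> nat \<Rightarrow> real"
  assumes fA: "finite A" and fB: "finite B" and fP: "finite P"
    and sp: "\<And>a b. a \<in> A \<Longrightarrow> b \<in> B \<Longrightarrow> z a b \<noteq> 0 \<Longrightarrow> (a, b) \<in> P"
  shows "(\<Sum>b\<in>B. \<Sum>a\<in>A. z a b) = (\<Sum>g\<in>P \<inter> (A \<times> B). z (fst g) (snd g))"
    and "(\<Sum>a\<in>A. \<Sum>b\<in>B. z a b) = (\<Sum>g\<in>P \<inter> (A \<times> B). z (fst g) (snd g))"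
proof -
  have "(\<Sum>a\<in>A. \<Sum>b\<in>B. z a b) = (\<Sum>g\<in>A \<times> B. z (fst g) (snd g))"
    by (simp add: sum.cartesian_product case_prod_beta)
  also have "\<dots> = (\<Sum>g\<in>P \<inter> (A \<times> B). z (fst g) (snd g))"
    by (rule sum.mono_neutral_right) (use fA fB sp in auto)
  finally show "(\<Sum>a\<in>A. \<Sum>b\<in>B. z a b) = (\<Sum>g\<in>P \<inter> (A \<times> B). z (fst g) (snd g))" .
  then show "(\<Sum>b\<in>B. \<Sum>a\<in>A. z a b) = (\<Sum>g\<in>P \<inter> (A \<times> B). z (fst g) (snd g))"
    by (metis (no_types) sum.swap)
qed

context pstep begin

lemma f_side: "reach (C - {f}) (Sup i) (Sup a') \<and> reach (C - {f}) (Dem d') (Dem j)"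
proof -
  let ?R = "reach (C - {f}) (Dem d')"
  define I where "I = {a. a < N1 \<and> ?R (Sup a)}"
  define J where "J = {b. b < N2 \<and> ?R (Dem b)}"
  have I: "I \<subseteq> {..<N1}" and J: "J \<subseteq> {..<N2}" unfolding I_def J_def by auto
  have fr: "a' < N1" "d' < N2" using tree_edge_range[OF Ctree fC] by auto
  have nb: "\<not> ?R (Sup a')" using tree_bridge[OF Ctree fC] reach_sym by blast
  have a'I: "a' \<notin> I" using nb I_def by auto
  have d'J: "d' \<in> J" using fr J_def by auto
  have clo1: "a \<in> I" if "(a, b) \<in> C" "(a, b) \<noteq> f" "b \<in> J" for a b
  proof -
    have "adj (C - {f}) (Dem b) (Sup a)" using that by simp
    then show ?thesis using that J_def I_def tree_edge_range[OF Ctree that(1)] reach_step by blast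
  qed
  have clo2: "b \<in> J" if "(a, b) \<in> C" "(a, b) \<noteq> f" "a \<in> I" for a b
  proof -
    have "adj (C - {f}) (Sup a) (Dem b)" using that by simp
    then show ?thesis using that J_def I_def tree_edge_range[OF Ctree that(1)] reach_step by blast
  qed
  have dsp: "d a b \<noteq> 0 \<Longrightarrow> (a, b) \<in> insert e C" for a b using sd unfolding supp_def by auto
  have fP: "finite {f, e}" by simp
  have ef: "e \<noteq> f" using eC fC by auto
  have z1: "(\<Sum>b\<in>J. \<Sum>a<N1. d a b) = 0" using dcl J by (intro sum.neutral) auto
  have z2: "(\<Sum>a\<in>I. \<Sum>b<N2. d a b) = 0" using drw I by (intro sum.neutral) auto
  have "(\<Sum>b\<in>J. \<Sum>a<N1. d a b) - (\<Sum>a\<in>I. \<Sum>b<N2. d a b) = 0" using z1 z2 by simp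
  then have fl: "(\<Sum>b\<in>J. \<Sum>a\<in>{..<N1} - I. d a b) = (\<Sum>a\<in>I. \<Sum>b\<in>{..<N2} - J. d a b)"
    using flow_identity[OF I J, of d] by simp
  have infl: "(\<Sum>b\<in>J. \<Sum>a\<in>{..<N1} - I. d a b) = (\<Sum>g\<in>{f, e} \<inter> (({..<N1} - I) \<times> J). d (fst g) (snd g))"
  proof (rule sum_sparse(1))
    show "finite ({..<N1} - I)" "finite J" "finite {f, e}" using J finite_subset by auto
    fix a b assume a: "a \<in> {..<N1} - I" "b \<in> J" "d a b \<noteq> 0"
    show "(a, b) \<in> {f, e}"
    proof (cases "(a, b) \<in> C")
      case True then show ?thesis using clo1[OF True] a by blast
    next
      case False then show ?thesis using dsp[OF a(3)] by auto
    qed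
  qed
  have outfl: "(\<Sum>a\<in>I. \<Sum>b\<in>{..<N2} - J. d a b) = (\<Sum>g\<in>{f, e} \<inter> (I \<times> ({..<N2} - J)). d (fst g) (snd g))"
  proof (rule sum_sparse(2))
    show "finite I" "finite ({..<N2} - J)" "finite {f, e}" using I finite_subset by auto
    fix a b assume a: "a \<in> I" "b \<in> {..<N2} - J" "d a b \<noteq> 0"
    show "(a, b) \<in> {f, e}"
    proof (cases "(a, b) \<in> C")
      case True then show ?thesis using clo2[OF True] a by blast
    next
      case False then show ?thesis using dsp[OF a(3)] by auto
    qed
  qed
  have s1: "{f, e} \<inter> (({..<N1} - I) \<times> J) = insert f (if i \<notin> I \<and> j \<in> J then {e} else {})"
    using a'I d'J fr i jN by auto
  have s2: "{f, e} \<inter> (I \<times> ({..<N2} - J)) = (if i \<in> I \<and> j \<notin> J then {e} else {})"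
    using a'I d'J fr i jN by auto
  have "i \<notin> I \<and> j \<in> J"
  proof (rule ccontr)
    assume nn: "\<not> (i \<notin> I \<and> j \<in> J)"
    then have "{f, e} \<inter> (({..<N1} - I) \<times> J) = {f}" using s1 by presburger
    then have "(\<Sum>b\<in>J. \<Sum>a\<in>{..<N1} - I. d a b) = -1" using infl df by simp
    moreover have "(\<Sum>a\<in>I. \<Sum>b\<in>{..<N2} - J. d a b) \<ge> 0" using outfl s2 d1 by simp
    ultimately show False using fl by simp
  qed
  then have r1: "\<not> ?R (Sup i)" and r2: "?R (Dem j)" using I_def J_def i by auto
  have "reach (C - {f}) (Sup a') (Sup i)" using tree_two_sides[OF Ctree fC, of "Sup i"] r1 i by simp
  then show ?thesis using r2 reach_sym by blast
qed

lemma i_not_d': "\<not> reach (C - {f}) (Sup i) (Dem d')"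
  using f_side tree_side_unique[OF Ctree fC, of "Sup i"] by blast

lemma f_odd: "odd_edge C i f"
  using f_side odd_iff fC by simp

end


lemma term_le_dsum:
  fixes z :: "nat \<Rightarrow> nat \<Rightarrow> real"
  assumes "finite A" "finite B" "a \<in> A" "b \<in> B" "\<And>a b. a \<in> A \<Longrightarrow> b \<in> B \<Longrightarrow> z a b \<ge> 0"
  shows "z a b \<le> (\<Sum>a\<in>A. \<Sum>b\<in>B. z a b)" and "z a b \<le> (\<Sum>b\<in>B. \<Sum>a\<in>A. z a b)"
proof -
  have "z a b \<le> (\<Sum>b\<in>B. z a b)" using assms by (intro member_le_sum) auto
  also have "\<dots> \<le> (\<Sum>a\<in>A. \<Sum>b\<in>B. z a b)"
    using assms by (intro member_le_sum[where f="\<lambda>a. \<Sum>b\<in>B. z a b"]) (auto intro: sum_nonneg)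
  finally show "z a b \<le> (\<Sum>a\<in>A. \<Sum>b\<in>B. z a b)" .
  then show "z a b \<le> (\<Sum>b\<in>B. \<Sum>a\<in>A. z a b)" by (metis (no_types) sum.swap)
qed

context pstep begin

lemma f_notS: "f \<notin> S"
proof
  assume fS: "f \<in> S"
  have fm: "minus_edge F ds f" and wd': "wc (Dem d')" using SIN'[OF f_odd fS] by auto
  have fF: "f \<in> F" using fS SCF by blast
  have SF: "S \<subseteq> F" using SCF by blast
  have Sinr: "inr N1 N2 S" using SCF tree_inr[OF Ctree] unfolding inr_def by blast
  have fr: "a' < N1" "d' < N2" using tree_edge_range[OF Ctree fC] by auto
  have lf: "LF (Dem d') = LF (Sup a') + 1" using fm minus_lvl by simp
  let ?Z1 = "Cl F ds C S (Dem d')" and ?Z2 = "Cl F ds C S (Sup i)"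
  define Y where "Y = ?Z1 \<union> (if Dem j \<in> ?Z1 then ?Z2 else {})"
  have W1: "wc z" if "z \<in> ?Z1" for z using Cl_wc that wd' by blast
  have W2: "wc z" if "z \<in> ?Z2" "z \<noteq> Sup i" for z using Cl_wc that by blast
  have iZ1: "Sup i \<notin> ?Z1" using W1 wc_i by blast
  have jplus: "plus_edge F ds (i, j)" if jz: "Dem j \<in> ?Z1"
  proof (rule ccontr)
    assume "\<not> ?thesis"
    then have m: "minus_edge F ds (i, j)" using plus_or_minus eF by blast
    show False
    proof (cases "j = d'")
      case True
      then have "i = a'" using minus_unique m fm by blast
      then show False using True eC fC by simp
    next
      case False
      have "Sup i \<in> ?Z1" using Cl_parent[OF SF jz] False m minus_lvl by simp
      then show False using iZ1 by simp
    qed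
  qed
  have Y5: "Sup i \<in> Y \<longleftrightarrow> Dem j \<in> Y"
  proof
    assume "Sup i \<in> Y"
    then have "Dem j \<in> ?Z1" using iZ1 unfolding Y_def by (auto split: if_splits)
    then show "Dem j \<in> Y" unfolding Y_def by simp
  next
    assume "Dem j \<in> Y"
    then have "Dem j \<in> ?Z1" unfolding Y_def by (auto split: if_splits)
    then show "Sup i \<in> Y" unfolding Y_def by (simp add: Cl_root)
  qed
  have a'Y: "Sup a' \<notin> Y"
  proof
    assume a: "Sup a' \<in> Y"
    have "Sup a' \<notin> ?Z1" using Cl_level lf by fastforce
    then have jz: "Dem j \<in> ?Z1" and az: "Sup a' \<in> ?Z2" using a unfolding Y_def by (auto split: if_splits)
    have "adj S (Sup a') (Dem d')" using fS by simp
    then have "Dem d' \<in> ?Z2" using Cl_step[OF az _ _ wd'] lf by simp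
    then have "Dem j \<in> ?Z2" using Cl_mono jz by blast
    then have "LF (Sup i) \<le> LF (Dem j)" using Cl_level by blast
    moreover have "LF (Sup i) = LF (Dem j) + 1" using jplus[OF jz] plus_lvl by simp
    ultimately show False by simp
  qed
  have d'Y: "Dem d' \<in> Y" unfolding Y_def by (simp add: Cl_root)
  have Y3: "Sup a \<in> Y" if b: "Dem b \<in> Y" and ab: "(a, b) \<in> C" "(a, b) \<noteq> f" for a b
  proof -
    have inZ: "Dem b \<in> ?Z1 \<or> (Dem j \<in> ?Z1 \<and> Dem b \<in> ?Z2)" using b unfolding Y_def by (auto split: if_splits)
    have wb: "wc (Dem b)" using inZ W1 W2 by blast
    have abS: "(a, b) \<in> S" using wb ab(1) unfolding wc_Dem by blast
    then have abF: "(a, b) \<in> F" using SF by blast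
    have adjS: "adj S (Dem b) (Sup a)" using abS by simp
    show ?thesis
    proof (cases "plus_edge F ds (a, b)")
      case True
      then have wa: "wc (Sup a)" using noplus' abS by blast
      have l: "LF (Sup a) = LF (Dem b) + 1" using True plus_lvl by simp
      from inZ show ?thesis
      proof
        assume "Dem b \<in> ?Z1"
        then have "Sup a \<in> ?Z1" using Cl_step[OF _ adjS l wa] by blast
        then show ?thesis unfolding Y_def by simp
      next
        assume h: "Dem j \<in> ?Z1 \<and> Dem b \<in> ?Z2"
        then have "Sup a \<in> ?Z2" using Cl_step[OF _ adjS l wa] by blast
        then show ?thesis using h unfolding Y_def by simp
      qed
    next
      case False
      then have m: "minus_edge F ds (a, b)" using plus_or_minus abF by blast
      have l: "LF (Sup a) + 1 = LF (Dem b)" using m minus_lvl by simp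
      have ad: "adj F (Sup a) (Dem b)" using abF by simp
      from inZ show ?thesis
      proof
        assume z1: "Dem b \<in> ?Z1"
        have "b \<noteq> d'" using minus_unique[OF m] fm ab(2) by blast
        then have "Sup a \<in> ?Z1" using Cl_parent[OF SF z1 _ ad l] by simp
        then show ?thesis unfolding Y_def by simp
      next
        assume h: "Dem j \<in> ?Z1 \<and> Dem b \<in> ?Z2"
        then have "Sup a \<in> ?Z2" using Cl_parent[OF SF _ _ ad l] by simp
        then show ?thesis using h unfolding Y_def by simp
      qed
    qed
  qed
  have Y4: "Dem b \<in> Y" if a: "Sup a \<in> Y" and ab: "(a, b) \<in> F" for a b
  proof -
    have gen: "Dem b \<in> Cl F ds C S r" if z: "Sup a \<in> Cl F ds C S r" and ne: "Sup a \<noteq> r"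
       and wa: "wc (Sup a)" for r
    proof -
      have abS: "(a, b) \<in> S" using wa ab unfolding wc_Sup by blast
      show ?thesis
      proof (cases "plus_edge F ds (a, b)")
        case True
        have l: "LF (Dem b) + 1 = LF (Sup a)" using True plus_lvl by simp
        have ad: "adj F (Dem b) (Sup a)" using ab by simp
        show ?thesis using Cl_parent[OF SF z ne ad l] .
      next
        case False
        then have m: "minus_edge F ds (a, b)" using plus_or_minus ab by blast
        have "wc (Dem b)" using INV[OF abS m wa] .
        moreover have "adj S (Sup a) (Dem b)" using abS by simp
        moreover have "LF (Dem b) = LF (Sup a) + 1" using m minus_lvl by simp
        ultimately show ?thesis using Cl_step[OF z] by blast
      qed
    qed
    have inZ: "Sup a \<in> ?Z1 \<or> (Dem j \<in> ?Z1 \<and> Sup a \<in> ?Z2)" using a unfolding Y_def by (auto split: if_splits)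
    from inZ show ?thesis
    proof
      assume z1: "Sup a \<in> ?Z1"
      then have "Dem b \<in> ?Z1" using gen[OF z1] W1[OF z1] by simp
      then show ?thesis unfolding Y_def by simp
    next
      assume h: "Dem j \<in> ?Z1 \<and> Sup a \<in> ?Z2"
      show ?thesis
      proof (cases "a = i")
        case False
        then have "Dem b \<in> ?Z2" using gen[of "Sup i"] h W2 by simp
        then show ?thesis using h unfolding Y_def by simp
      next
        case True
        show ?thesis
        proof (cases "plus_edge F ds (a, b)")
          case pl: True
          then have "b = j" using plus_unique jplus h True by blast
          then show ?thesis using h unfolding Y_def by simp
        next
          case False
          then have m: "minus_edge F ds (i, b)" using plus_or_minus ab True by blast
          have iS: "(i, b) \<in> S" using choice' jplus[OF conjunct1[OF h]] plus_not_minus m by blast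
          have "wc (Dem b)" using SIN_i[OF iS] by blast
          moreover have "adj S (Sup i) (Dem b)" using iS by simp
          moreover have "LF (Dem b) = LF (Sup i) + 1" using m minus_lvl by simp
          ultimately have "Dem b \<in> ?Z2" using Cl_step[OF Cl_root] by blast
          then show ?thesis using h unfolding Y_def by simp
        qed
      qed
    qed
  qed
  define I where "I = {a. a < N1 \<and> Sup a \<in> Y}"
  define J where "J = {b. b < N2 \<and> Dem b \<in> Y}"
  have I: "I \<subseteq> {..<N1}" and J: "J \<subseteq> {..<N2}" unfolding I_def J_def by auto
  have fI: "finite I" and fJ: "finite J" using I J finite_subset by auto
  have a'I: "a' \<notin> I" using a'Y I_def by simp
  have d'J: "d' \<in> J" using d'Y fr J_def by simp
  have eIJ: "i \<in> I \<longleftrightarrow> j \<in> J" using Y5 i jN I_def J_def by simp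
  have fP: "finite {f}" by simp
  have dsp: "d a b \<noteq> 0 \<Longrightarrow> (a, b) \<in> insert e C" for a b using sd unfolding supp_def by auto
  have in_only_f: "(a, b) = f" if "a \<in> {..<N1} - I" "b \<in> J" "(a, b) \<in> insert e C" for a b
  proof -
    have "(a, b) \<noteq> e" using that eIJ by auto
    then have "(a, b) \<in> C" using that by auto
    then show ?thesis using Y3[of b a] that I_def J_def by auto
  qed
  have out_C: "(a, b) \<in> C" if "a \<in> I" "b \<in> {..<N2} - J" "(a, b) \<in> insert e C" for a b
    using that eIJ by auto
  have z1: "(\<Sum>b\<in>J. \<Sum>a<N1. d a b) = 0" using dcl J by (intro sum.neutral) auto
  have z2: "(\<Sum>a\<in>I. \<Sum>b<N2. d a b) = 0" using drw I by (intro sum.neutral) auto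
  have dfl: "(\<Sum>b\<in>J. \<Sum>a\<in>{..<N1} - I. d a b) = (\<Sum>a\<in>I. \<Sum>b\<in>{..<N2} - J. d a b)"
    using flow_identity[OF I J, of d] z1 z2 by simp
  have din: "(\<Sum>b\<in>J. \<Sum>a\<in>{..<N1} - I. d a b) = -1"
  proof -
    have "(\<Sum>b\<in>J. \<Sum>a\<in>{..<N1} - I. d a b) = (\<Sum>g\<in>{f} \<inter> (({..<N1} - I) \<times> J). d (fst g) (snd g))"
      by (rule sum_sparse(1)) (use fJ in_only_f dsp in auto)
    also have "{f} \<inter> (({..<N1} - I) \<times> J) = {f}" using a'I d'J fr by auto
    finally show ?thesis using df by simp
  qed
  obtain a0 b0 where ab0: "a0 \<in> I" "b0 \<in> {..<N2} - J" "d a0 b0 < 0"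
  proof -
    have "(\<Sum>a\<in>I. \<Sum>b\<in>{..<N2} - J. d a b) < 0" using dfl din by simp
    moreover have "(\<forall>a\<in>I. \<forall>b\<in>{..<N2} - J. d a b \<ge> 0) \<Longrightarrow> (\<Sum>a\<in>I. \<Sum>b\<in>{..<N2} - J. d a b) \<ge> 0"
      by (auto intro!: sum_nonneg)
    ultimately have "\<not> (\<forall>a\<in>I. \<forall>b\<in>{..<N2} - J. d a b \<ge> 0)" by linarith
    then show ?thesis using that by force
  qed
  have ab0C: "(a0, b0) \<in> C" using out_C[OF ab0(1,2)] dsp ab0(3) by force
  have "d a0 b0 = -1" using dv[rule_format, of a0 b0] ab0(3) by auto
  then have tle: "t \<le> y a0 b0" using tmin by simp
  have ysp: "y a b \<noteq> 0 \<Longrightarrow> (a, b) \<in> C" for a b using sy unfolding supp_def by auto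
  have yin: "(\<Sum>b\<in>J. \<Sum>a\<in>{..<N1} - I. y a b) = y a' d'"
  proof -
    have "(\<Sum>b\<in>J. \<Sum>a\<in>{..<N1} - I. y a b) = (\<Sum>g\<in>{f} \<inter> (({..<N1} - I) \<times> J). y (fst g) (snd g))"
      by (rule sum_sparse(1)) (use fJ in_only_f ysp in auto)
    also have "{f} \<inter> (({..<N1} - I) \<times> J) = {f}" using a'I d'J fr by auto
    finally show ?thesis by simp
  qed
  have yout: "y a0 b0 \<le> (\<Sum>a\<in>I. \<Sum>b\<in>{..<N2} - J. y a b)"
    by (rule term_le_dsum(1)) (use fI ab0 TP_nonneg[OF yT] in auto)
  have yfl: "(\<Sum>b\<in>J. \<Sum>a<N1. y a b) - (\<Sum>a\<in>I. \<Sum>b<N2. y a b) = y a' d' - (\<Sum>a\<in>I. \<Sum>b\<in>{..<N2} - J. y a b)"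
    using flow_identity[OF I J, of y] yin by simp
  obtain yF where yF: "yF \<in> TP N1 N2 u v" "supp yF = F" using yF_ex by blast
  have yFout: "(\<Sum>a\<in>I. \<Sum>b\<in>{..<N2} - J. yF a b) = 0"
  proof (intro sum.neutral ballI)
    fix a b assume a: "a \<in> I" and b: "b \<in> {..<N2} - J"
    show "yF a b = 0"
    proof (rule ccontr)
      assume "yF a b \<noteq> 0"
      then have "(a, b) \<in> F" using yF(2) supp_def by auto
      then have "Dem b \<in> Y" using Y4 a I_def by auto
      then show False using b J_def by auto
    qed
  qed
  have yFin: "yF a' d' \<le> (\<Sum>b\<in>J. \<Sum>a\<in>{..<N1} - I. yF a b)"
    by (rule term_le_dsum(2)) (use fJ a'I d'J fr TP_nonneg[OF yF(1)] in auto)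
  have yFpos: "yF a' d' > 0" using fF yF TP_nonneg[OF yF(1), of a' d'] unfolding supp_def by auto
  have yFfl: "(\<Sum>b\<in>J. \<Sum>a<N1. yF a b) - (\<Sum>a\<in>I. \<Sum>b<N2. yF a b) = (\<Sum>b\<in>J. \<Sum>a\<in>{..<N1} - I. yF a b)"
    using flow_identity[OF I J, of yF] yFout by simp
  have same: "(\<Sum>b\<in>J. \<Sum>a<N1. y a b) - (\<Sum>a\<in>I. \<Sum>b<N2. y a b) =
              (\<Sum>b\<in>J. \<Sum>a<N1. yF a b) - (\<Sum>a\<in>I. \<Sum>b<N2. yF a b)"
  proof -
    have "(\<Sum>b\<in>J. \<Sum>a<N1. y a b) = sum v J"
      by (rule sum.cong[OF refl]) (use TP_col[OF yT] J in auto)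
    moreover have "(\<Sum>b\<in>J. \<Sum>a<N1. yF a b) = sum v J"
      by (rule sum.cong[OF refl]) (use TP_col[OF yF(1)] J in auto)
    moreover have "(\<Sum>a\<in>I. \<Sum>b<N2. y a b) = sum u I"
      by (rule sum.cong[OF refl]) (use TP_row[OF yT] I in auto)
    moreover have "(\<Sum>a\<in>I. \<Sum>b<N2. yF a b) = sum u I"
      by (rule sum.cong[OF refl]) (use TP_row[OF yF(1)] I in auto)
    ultimately show ?thesis by simp
  qed
  have "y a0 b0 < y a' d'" using yfl yFfl same yout yFin yFpos by linarith
  then have "y a' d' + t * d a' d' > 0" using tle df by simp
  then have "f \<in> C'" using C'd unfolding supp_def by auto
  then show False using fC' by simp
qed

lemma S'eq: "S' = insert e S"
  using S'd fdel f_notS eC fC by auto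

end


context pstep begin

lemma SC': "S \<subseteq> C'" using SCF f_notS C'eq by auto
lemma SCF': "S' \<subseteq> C' \<inter> F" using SC' SCF eC' eF S'eq by auto

lemma wcS': "x \<noteq> i \<Longrightarrow> wc' (Sup x) \<longleftrightarrow> wc (Sup x)"
proof -
  assume xi: "x \<noteq> i"
  have "((x, b) \<in> C' \<and> (x, b) \<in> S') \<longleftrightarrow> ((x, b) \<in> C \<and> (x, b) \<in> S)" for b
    using xi SC' SCF S'eq by auto
  then show ?thesis unfolding wc_Sup by simp
qed

lemma wcD': "wc (Dem z) \<Longrightarrow> wc' (Dem z)"
  unfolding wc_Dem S'eq C'eq by auto

lemma pg: "noplusP C' S'" "invP C' S'"
  using post_generic[OF S'eq SC' eC' wcS' wcD'] by auto

lemma i_adj: "(i, d') \<notin> C - {f}"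
  using i_not_d' by (auto simp: r_into_rtranclp)

lemma d'_open: "\<not> wc (Dem d')" using fC f_notS unfolding wc_Dem by blast

lemma claimB:
  assumes r: "r < N1" "(r, d') \<in> C'" and h: "(a, b) \<in> C" "(a, b) \<noteq> f" "(a, b) \<noteq> (r, d')"
  shows "odd_edge C' r (a, b) \<longleftrightarrow> odd_edge C i (a, b)"
proof -
  let ?h = "(a, b)"
  have hC': "?h \<in> C'" using h C'eq by auto
  have ab: "a < N1" "b < N2" using tree_edge_range[OF Ctree h(1)] by auto
  have "reach (C - {?h}) (Sup a) (Sup i) \<or> reach (C - {?h}) (Dem b) (Sup i)"
    using tree_two_sides[OF Ctree h(1), of "Sup i"] i by auto
  then obtain w where w: "w = Sup a \<or> w = Dem b" and iw: "reach (C - {?h}) (Sup i) w"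
    using reach_sym by blast
  have "adj (C - {f}) (Sup a) (Dem b)" using h by simp
  then have hw: "reach (C - {f}) (Sup a) w"
    using w by (auto intro: r_into_rtranclp)
  have rw: "reach (C' - {?h}) (Sup r) w"
  proof (cases "reach (C - {f}) (Dem d') (Sup a)")
    case True
    have n1: "\<not> reach (C - {f}) (Sup i) (Sup a)"
      using True i_not_d' reach_sym reach_trans by metis
    have "reach ((C - {f}) - {?h}) (Sup i) (Sup a')"
      using reach_avoid_S[OF conjunct1[OF f_side] n1] .
    then have "reach (C - {?h}) (Sup i) (Sup a')" by (rule reach_mono) auto
    moreover have "adj (C - {?h}) (Sup a') (Dem d')" using fC h(2) by auto
    ultimately have "reach (C - {?h}) (Sup i) (Dem d')" using reach_step by blast
    then have r1: "reach (C - {?h}) (Dem d') w" using iw reach_sym reach_trans by blast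
    have r2: "reach (C - {f}) (Dem d') w" using True hw reach_trans by blast
    have "reach ((C - {f}) - {?h}) (Dem d') w"
      using tree_refine[OF Ctree h(1) _ r2 r1 w] by blast
    then have r3: "reach (C' - {?h}) (Dem d') w" by (rule reach_mono) (auto simp: C'eq)
    have "adj (C' - {?h}) (Sup r) (Dem d')" using r h(3) by auto
    then show ?thesis using r3 by (meson converse_rtranclp_into_rtranclp)
  next
    case False
    have ad: "reach (C - {f}) (Sup a') (Sup a)"
      using tree_two_sides[OF Ctree fC, of "Sup a"] False ab by simp
    have r2: "reach (C - {f}) (Sup i) w" using f_side ad hw reach_trans by blast
    have "reach ((C - {f}) - {?h}) (Sup i) w"
      using tree_refine[OF Ctree h(1) _ r2 iw w] by blast
    then have r3: "reach (C' - {?h}) (Sup i) w" by (rule reach_mono) (auto simp: C'eq)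
    have "reach (C' - {?h}) (Sup r) (Sup i)"
    proof (cases "(r, d') = e")
      case True then show ?thesis by simp
    next
      case ne: False
      have rC: "(r, d') \<in> C - {f}" using r(2) ne C'eq by auto
      have "reach ((C - {f}) - {?h}) (Dem d') (Dem j)"
        using reach_avoid_S[OF conjunct2[OF f_side] False] .
      then have "reach (C' - {?h}) (Dem d') (Dem j)" by (rule reach_mono) (auto simp: C'eq)
      moreover have "adj (C' - {?h}) (Dem j) (Sup i)" using eC' h(1) eC by auto
      moreover have "adj (C' - {?h}) (Sup r) (Dem d')" using r(2) h(3) by auto
      ultimately show ?thesis by (meson converse_rtranclp_into_rtranclp reach_step)
    qed
    then show ?thesis using r3 reach_trans by blast
  qed
  from w show ?thesis
  proof
    assume "w = Sup a"
    then show ?thesis using odd_edge_iff[OF C'tree r(1)] odd_iff iw rw hC' h(1) by simp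
  next
    assume wb: "w = Dem b"
    have "\<not> reach (C - {?h}) (Sup i) (Sup a)" using tree_side_unique[OF Ctree h(1)] iw wb by blast
    moreover have "\<not> reach (C' - {?h}) (Sup r) (Sup a)" using tree_side_unique[OF C'tree hC'] rw wb by blast
    ultimately show ?thesis using odd_edge_iff[OF C'tree r(1)] odd_iff by simp
  qed
qed

lemma not_e:
  assumes "(r, d') \<in> C - {f}" "r < N1"
  shows "\<not> odd_edge C' r e"
proof
  assume "odd_edge C' r e"
  then have r1: "reach (C' - {e}) (Sup r) (Sup i)" using odd_edge_iff[OF C'tree assms(2)] by simp
  have "C' - {e} = C - {f}" using C'eq eC by auto
  then have "reach (C - {f}) (Sup r) (Sup i)" using r1 by simp
  moreover have "reach (C - {f}) (Sup r) (Dem d')" using assms(1) by (simp add: r_into_rtranclp)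
  ultimately show False using i_not_d' reach_sym reach_trans by metis
qed

lemma SIN_B:
  assumes r: "r < N1" "(r, d') \<in> C'"
    and rd: "(r, d') \<in> S' \<Longrightarrow> minus_edge F ds (r, d') \<and> wc' (Dem d')"
  shows "SIN F ds C' S' r"
  unfolding SIN_def
proof (intro allI impI)
  fix g assume o: "odd_edge C' r g"
  show "g \<notin> S' \<or> minus_edge F ds g \<and> wc' (Dem (snd g))"
  proof (cases "g \<in> S'")
    case False then show ?thesis by simp
  next
    case gS: True
    show ?thesis
    proof (cases "g = (r, d')")
      case True then show ?thesis using rd gS by simp
    next
      case ne: False
      show ?thesis
      proof (cases "g = e")
        case True
        then have "(r, d') \<in> C - {f}" using r(2) ne C'eq by auto
        then show ?thesis using not_e r(1) o True by blast
      next
        case False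
        then have gS0: "g \<in> S" using gS S'eq by auto
        then have gC: "g \<in> C" and gf: "g \<noteq> f" using SCF f_notS by auto
        obtain a b where gab: "g = (a, b)" by (cases g)
        have "odd_edge C i g" using claimB[OF r gC[unfolded gab] gf[unfolded gab] ne[unfolded gab]] o gab by simp
        then show ?thesis using SIN'[OF _ gS0] wcD' by auto
      qed
    qed
  qed
qed

lemma caseB: concl
proof (rule finish[OF C'tree y'T sy' SCF' pg])
  show "d' < N2" using tree_edge_range[OF Ctree fC] by simp
  show "\<And>d''. (if (i, j) \<in> C then d'' = j else (\<exists>a. (a, d'') \<in> C - C')) \<Longrightarrow> d'' = d'"
    using eC fdel by auto
next
  fix a assume a: "(a, d') \<in> C' - S'"
  have ae: "(a, d') \<noteq> e" using a S'eq by auto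
  then have aC: "(a, d') \<in> C - {f}" using a C'eq by auto
  have ai: "a \<noteq> i" using aC i_adj by auto
  have aN: "a < N1" using tree_edge_range[OF Ctree] aC by auto
  have op: "\<not> wc' (Sup a)"
  proof
    assume "wc' (Sup a)"
    then have wa: "wc (Sup a)" using wcS' ai by blast
    obtain p where p: "plus_edge F ds (a, p)" using plus_exists aN by blast
    have pF: "(a, p) \<in> F" using p plus_edge_def by blast
    then have pS: "(a, p) \<in> S" using wa unfolding wc_Sup by blast
    then have pC: "(a, p) \<in> C" and pf: "(a, p) \<noteq> f" using SCF f_notS by auto
    have pd: "(a, p) \<noteq> (a, d')" using pS a S'eq by auto
    have "(a, p) \<in> C'" using pC pf C'eq by auto
    then have "odd_edge C' a (a, p)" using odd_edge_iff[OF C'tree aN] by simp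
    then have "odd_edge C i (a, p)" using claimB[OF aN _ pC pf pd] a by auto
    then have "minus_edge F ds (a, p)" using SIN' pS by auto
    then show False using p plus_not_minus by blast
  qed
  show "open_node N1 N2 F C' S' (Sup a) \<and> SIN F ds C' S' a"
    using op aN SIN_B[OF aN] a unfolding open_node_def by auto
next
  fix a assume nu: "\<forall>a'. (a', d') \<notin> C' - S'" and m: "minus_edge F ds (a, d')"
  have wd: "wc' (Dem d')" using nu unfolding wc_Dem by blast
  have d'N: "d' < N2" using tree_edge_range[OF Ctree fC] by simp
  have aC': "(a, d') \<in> C'" using minus_in_C2[OF y'T sy' SCF' pg d'N wd m] .
  have aN: "a < N1" using tree_edge_range[OF C'tree aC'] by simp
  have SINa: "SIN F ds C' S' a" using SIN_B[OF aN aC'] m wd by blast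
  show "open_node N1 N2 F C' S' (Sup a) \<and> SIN F ds C' S' a"
  proof (cases "(a, d') = e")
    case True
    then have "a = i" "minus_edge F ds (i, j)" using m by auto
    then have "\<not> wc' (Sup a)" using wc_i_new[OF S'eq SC' eC'] plus_not_minus by auto
    then show ?thesis using SINa aN unfolding open_node_def by auto
  next
    case False
    then have aC: "(a, d') \<in> C - {f}" using aC' C'eq by auto
    have ai: "a \<noteq> i" using aC i_adj by auto
    have aS: "(a, d') \<in> S" using wd aC' False S'eq unfolding wc_Dem by auto
    have "\<not> wc' (Sup a)" using wcS'[OF ai] INV[OF aS m] d'_open by blast
    then show ?thesis using SINa aN unfolding open_node_def by auto
  qed
qed

end

context step begin

lemma main: concl
proof (cases "(i, j) \<in> C")
  case True then show ?thesis using caseA by blast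
next
  case False
  obtain y d t a' d' where P: "is_vertex N1 N2 u v y \<and> supp y = C \<and> supp d \<subseteq> insert (i, j) C \<and>
     d i j = 1 \<and> (\<forall>a b. d a b \<in> {-1, 0, 1}) \<and>
     (\<forall>a<N1. (\<Sum>b<N2. d a b) = 0) \<and> (\<forall>b<N2. (\<Sum>a<N1. d a b) = 0) \<and>
     t > 0 \<and> (\<forall>a b. 0 \<le> y a b + t * d a b) \<and> C' = supp (\<lambda>a b. y a b + t * d a b) \<and>
     C - C' = {(a', d')} \<and> S' = insert (i, j) S - (C - C')"
    using pivot_ex[OF False] by blast
  interpret ps: pstep N1 N2 u v F ds C S C' S' i j y d t a' d'
    by unfold_locales (use P False in auto)
  show ?thesis using ps.caseB .
qed

end

theorem lemma5:
  fixes N1 N2 :: nat and u v :: "nat \<Rightarrow> real"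
    and F C S C' S' :: "(nat \<times> nat) set" and ds i j :: nat
  assumes "N1 \<ge> 1" and "N2 \<ge> 1"
    and "\<forall>a<N1. u a > 0" and "\<forall>b<N2. v b > 0"
    and "(\<Sum>a<N1. u a) = (\<Sum>b<N2. v b)"
    and "non_degenerate N1 N2 u v"
    and "vertex_tree N1 N2 u v F" and "ds < N2"
    and "vertex_tree N1 N2 u v C" and "S \<subseteq> C \<inter> F"
    and UNO: "UNO N1 N2 F C S"
    and noplus: "\<forall>e\<in>S. plus_edge F ds e \<longrightarrow> \<not> open_node N1 N2 F C S (Sup (fst e))"
    and "i < N1" and SIN: "SIN F ds C S i"
    and choice: "if (\<exists>j'. (i, j') \<in> F - S \<and> minus_edge F ds (i, j'))
                 then minus_edge F ds (i, j) \<and> (i, j) \<notin> S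
                 else plus_edge F ds (i, j)"
    and shade: "shade N1 N2 u v F C S (i, j) C' S'"
  shows
    "(well_connected F C' S' (Dem ds) \<longrightarrow> S' = C' \<and> C' = F) \<and>
     (\<not> well_connected F C' S' (Dem ds) \<longrightarrow>
        S' \<noteq> C' \<and> UNO N1 N2 F C' S' \<and>
        (\<exists>a. open_node N1 N2 F C' S' (Sup a) \<and> SIN F ds C' S' a) \<and>
        (\<forall>d'. (if (i, j) \<in> C then d' = j else (\<exists>a. (a, d') \<in> C - C')) \<longrightarrow>
           (\<forall>a. (a, d') \<in> C' - S' \<longrightarrow> open_node N1 N2 F C' S' (Sup a) \<and> SIN F ds C' S' a) \<and>
           ((\<forall>a. (a, d') \<notin> C' - S') \<longrightarrow>
              (\<forall>a. minus_edge F ds (a, d') \<longrightarrow> open_node N1 N2 F C' S' (Sup a) \<and> SIN F ds C' S' a))))"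
  proof -
  interpret step N1 N2 u v F ds C S C' S' i j
    by unfold_locales (use assms in auto)
  show ?thesis using main unfolding concl_def by blast
qed

end
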